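(* Let $\phi=\tilde p/p$ be an irreducible rational inner function on $\mathbb{D}^3$ of degree $(m,n,1)$, with $p(z)=p_1(z_1,z_2)+z_3p_2(z_1,z_2)$, $\tilde p(z)=z_3\tilde p_1(z_1,z_2)+\tilde p_2(z_1,z_2)$. Assume $(1,1,1)\in\mathcal{Z}_p\cap\mathbb{T}^3$ and that the vertical line $\{(1,1)\}\times\mathbb{T}$ is not contained in $\mathcal{Z}_p$. Let $\psi^0=-\tilde p_2/\tilde p_1$ and $\rho(\theta_1,\theta_2)=1-|\psi^0(e^{i\theta_1},e^{i\theta_2})|^2$, which is real analytic near $(0,0)$, with Taylor expansion $\rho(\theta_1,\theta_2)=\sum_{k,\ell\ge0}c_{k,\ell}\theta_1^k\theta_2^\ell$ at the origin. Then: (1) $c_{0,0}=c_{1,0}=c_{0,1}=0$; (2) the quadratic form $Q(\theta_1,\theta_2)=c_{2,0}\theta_1^2+c_{1,1}\theta_1\theta_2+c_{0,2}\theta_2^2$ is positive semi-definite; (3) if $Q$ is strictly positive definite, then $(1,1,1)$ is an isolated point of $\mathcal{Z}_p\cap\mathbb{T}^3$ (an isolated singularity of $\phi$ on $\mathbb{T}^3$); (4) if $Q$ is identically $0$, then $c_{3,0}=c_{2,1}=c_{1,2}=c_{0,3}=0$.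
   Context: A rational inner function (RIF) on $\mathbb{D}^3$ is a rational function holomorphic on the tridisk with unimodular radial limits a.e. on $\mathbb{T}^3$; it is written $\phi=\tilde p/p$ with $p$ zero-free on $\mathbb{D}^3$, $p,\tilde p$ without common factors, $\dim(\mathcal{Z}_p\cap\mathbb{T}^3)\le1$. For degree $(m,n,1)$, $\tilde p(z)=z_1^mz_2^nz_3\overline{p(1/\bar z_1,1/\bar z_2,1/\bar z_3)}$ and $\tilde p_j(z_1,z_2)=z_1^mz_2^n\overline{p_j(1/\bar z_1,1/\bar z_2)}$. The singular set of $\phi$ on $\mathbb{T}^3$ is $\mathcal{Z}_p\cap\mathbb{T}^3$, where $\mathcal{Z}_p$ is the zero set of $p$. *)

theory Defs
  imports "HOL-Analysis.Analysis"
begin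

text \<open>Polynomial functions on C^3 (a polynomial identity over C is the same as
  an identity of polynomial functions, since C is infinite).\<close>
definition poly3 :: "(complex \<Rightarrow> complex \<Rightarrow> complex \<Rightarrow> complex) \<Rightarrow> bool" where
  "poly3 f \<longleftrightarrow> (\<exists>(N::nat) (c::nat \<Rightarrow> nat \<Rightarrow> nat \<Rightarrow> complex). \<forall>z1 z2 z3.
      f z1 z2 z3 = (\<Sum>i\<le>N. \<Sum>j\<le>N. \<Sum>k\<le>N. c i j k * z1^i * z2^j * z3^k))"

definition const3 :: "(complex \<Rightarrow> complex \<Rightarrow> complex \<Rightarrow> complex) \<Rightarrow> bool" where
  "const3 f \<longleftrightarrow> (\<exists>c. \<forall>z1 z2 z3. f z1 z2 z3 = c)"

definition irreducible3 :: "(complex \<Rightarrow> complex \<Rightarrow> complex \<Rightarrow> complex) \<Rightarrow> bool" where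
  "irreducible3 f \<longleftrightarrow> poly3 f \<and> \<not> const3 f \<and>
     (\<forall>q r. poly3 q \<and> poly3 r \<and> (\<forall>z1 z2 z3. f z1 z2 z3 = q z1 z2 z3 * r z1 z2 z3)
        \<longrightarrow> const3 q \<or> const3 r)"

definition no_common_factor3 ::
  "(complex \<Rightarrow> complex \<Rightarrow> complex \<Rightarrow> complex) \<Rightarrow> (complex \<Rightarrow> complex \<Rightarrow> complex \<Rightarrow> complex) \<Rightarrow> bool" where
  "no_common_factor3 f g \<longleftrightarrow> \<not> (\<exists>q r s. poly3 q \<and> poly3 r \<and> poly3 s \<and> \<not> const3 q \<and>
      (\<forall>z1 z2 z3. f z1 z2 z3 = q z1 z2 z3 * r z1 z2 z3) \<and>
      (\<forall>z1 z2 z3. g z1 z2 z3 = q z1 z2 z3 * s z1 z2 z3))"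

definition pev :: "(nat \<Rightarrow> nat \<Rightarrow> nat \<Rightarrow> complex) \<Rightarrow> nat \<Rightarrow> nat \<Rightarrow> complex \<Rightarrow> complex \<Rightarrow> complex \<Rightarrow> complex" where
  "pev a m n z1 z2 z3 = (\<Sum>i\<le>m. \<Sum>j\<le>n. \<Sum>k\<le>1. a i j k * z1^i * z2^j * z3^k)"

text \<open>Reflection: ptilde(z) = z1^m z2^n z3 conj(p(1/conj z)), written as a polynomial.\<close>
definition ptev :: "(nat \<Rightarrow> nat \<Rightarrow> nat \<Rightarrow> complex) \<Rightarrow> nat \<Rightarrow> nat \<Rightarrow> complex \<Rightarrow> complex \<Rightarrow> complex \<Rightarrow> complex" where
  "ptev a m n z1 z2 z3 = (\<Sum>i\<le>m. \<Sum>j\<le>n. \<Sum>k\<le>1. cnj (a i j k) * z1^(m-i) * z2^(n-j) * z3^(1-k))"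

text \<open>p = p1 + z3 p2 ; ptilde = z3 ptilde1 + ptilde2 with ptilde_j = z1^m z2^n conj(p_j(1/conj z)).\<close>
definition p1ev :: "(nat \<Rightarrow> nat \<Rightarrow> nat \<Rightarrow> complex) \<Rightarrow> nat \<Rightarrow> nat \<Rightarrow> complex \<Rightarrow> complex \<Rightarrow> complex" where
  "p1ev a m n z1 z2 = (\<Sum>i\<le>m. \<Sum>j\<le>n. a i j 0 * z1^i * z2^j)"

definition p2ev :: "(nat \<Rightarrow> nat \<Rightarrow> nat \<Rightarrow> complex) \<Rightarrow> nat \<Rightarrow> nat \<Rightarrow> complex \<Rightarrow> complex \<Rightarrow> complex" where
  "p2ev a m n z1 z2 = (\<Sum>i\<le>m. \<Sum>j\<le>n. a i j 1 * z1^i * z2^j)"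

definition pt1ev :: "(nat \<Rightarrow> nat \<Rightarrow> nat \<Rightarrow> complex) \<Rightarrow> nat \<Rightarrow> nat \<Rightarrow> complex \<Rightarrow> complex \<Rightarrow> complex" where
  "pt1ev a m n z1 z2 = (\<Sum>i\<le>m. \<Sum>j\<le>n. cnj (a i j 0) * z1^(m-i) * z2^(n-j))"

definition pt2ev :: "(nat \<Rightarrow> nat \<Rightarrow> nat \<Rightarrow> complex) \<Rightarrow> nat \<Rightarrow> nat \<Rightarrow> complex \<Rightarrow> complex \<Rightarrow> complex" where
  "pt2ev a m n z1 z2 = (\<Sum>i\<le>m. \<Sum>j\<le>n. cnj (a i j 1) * z1^(m-i) * z2^(n-j))"

definition psi0 :: "(nat \<Rightarrow> nat \<Rightarrow> nat \<Rightarrow> complex) \<Rightarrow> nat \<Rightarrow> nat \<Rightarrow> complex \<Rightarrow> complex \<Rightarrow> complex" where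
  "psi0 a m n z1 z2 = - pt2ev a m n z1 z2 / pt1ev a m n z1 z2"

definition rho :: "(nat \<Rightarrow> nat \<Rightarrow> nat \<Rightarrow> complex) \<Rightarrow> nat \<Rightarrow> nat \<Rightarrow> real \<Rightarrow> real \<Rightarrow> real" where
  "rho a m n t1 t2 = 1 - (cmod (psi0 a m n (cis t1) (cis t2)))^2"

definition taylor2 :: "(real \<Rightarrow> real \<Rightarrow> real) \<Rightarrow> nat \<Rightarrow> nat \<Rightarrow> real" where
  "taylor2 f k l = (deriv ^^ k) (\<lambda>t1. (deriv ^^ l) (\<lambda>t2. f t1 t2) 0) 0 / (fact k * fact l)"

end

theory Submission
  imports Defs
begin
definition dterm :: "(nat \<Rightarrow> nat \<Rightarrow> 'a::{real_normed_field,banach}) \<Rightarrow> 'a \<Rightarrow> 'a \<Rightarrow> nat \<times> nat \<Rightarrow> 'a" where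
  "dterm b x y = (\<lambda>(k,l). b k l * x^k * y^l)"

definition dmaj :: "(nat \<Rightarrow> nat \<Rightarrow> 'a::{real_normed_field,banach}) \<Rightarrow> real \<Rightarrow> nat \<times> nat \<Rightarrow> real" where
  "dmaj b r = (\<lambda>(k,l). norm (b k l) * r^k * r^l)"

definition dconv :: "(nat \<Rightarrow> nat \<Rightarrow> 'a::{real_normed_field,banach}) \<Rightarrow> real \<Rightarrow> bool" where
  "dconv b r \<longleftrightarrow> dmaj b r summable_on UNIV"

definition dsr :: "(nat \<Rightarrow> nat \<Rightarrow> 'a::{real_normed_field,banach}) \<Rightarrow> 'a \<Rightarrow> 'a \<Rightarrow> 'a" where
  "dsr b x y = infsum (dterm b x y) UNIV"

definition dM :: "(nat \<Rightarrow> nat \<Rightarrow> 'a::{real_normed_field,banach}) \<Rightarrow> real \<Rightarrow> real" where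
  "dM b r = infsum (dmaj b r) UNIV"

lemma dmaj_nonneg: "r \<ge> 0 \<Longrightarrow> dmaj b r kl \<ge> 0"
  by (auto simp: dmaj_def split: prod.splits)

lemma norm_dterm_le:
  assumes "norm x \<le> r" "norm y \<le> r"
  shows "norm (dterm b x y kl) \<le> dmaj b r kl"
proof -
  obtain k l where kl: "kl = (k,l)" by fastforce
  have r0: "r \<ge> 0" using assms(1) norm_ge_zero order_trans by blast
  have "norm (b k l * x^k * y^l) = norm (b k l) * norm x ^ k * norm y ^ l"
    by (simp add: norm_mult norm_power)
  also have "\<dots> \<le> norm (b k l) * r ^ k * r ^ l"
    using assms r0 by (intro mult_mono power_mono mult_nonneg_nonneg) auto
  finally show ?thesis by (simp add: kl dterm_def dmaj_def)
qed

lemma dconv_abs: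
  assumes "dconv b r" "norm x \<le> r" "norm y \<le> r"
  shows "(\<lambda>kl. norm (dterm b x y kl)) summable_on UNIV"
proof (rule summable_on_comparison_test[where f="dmaj b r"])
  show "dmaj b r summable_on UNIV" using assms(1) unfolding dconv_def .
  show "norm (dterm b x y kl) \<le> dmaj b r kl" for kl using norm_dterm_le[OF assms(2,3)] .
qed simp

lemma dconv_has_sum:
  assumes "dconv b r" "norm x \<le> r" "norm y \<le> r"
  shows "(dterm b x y has_sum dsr b x y) UNIV"
  unfolding dsr_def using abs_summable_summable[OF dconv_abs[OF assms]] by simp

lemma dconv_mono:
  assumes "dconv b r" "0 \<le> r'" "r' \<le> r"
  shows "dconv b r'"
  unfolding dconv_def
proof (rule summable_on_comparison_test[where f="dmaj b r"])
  show "dmaj b r summable_on UNIV" using assms(1) unfolding dconv_def .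
  show "dmaj b r' kl \<le> dmaj b r kl" for kl
    using assms(2,3) by (cases kl) (simp add: dmaj_def mult_mono power_mono)
  show "0 \<le> dmaj b r' kl" for kl using assms(2) by (rule dmaj_nonneg)
qed

lemma dsr_norm_le:
  assumes "dconv b r" "norm x \<le> r" "norm y \<le> r"
  shows "norm (dsr b x y) \<le> dM b r"
  unfolding dM_def
  by (rule norm_infsum_le[OF dconv_has_sum[OF assms], of "dmaj b r"])
     (use assms in \<open>auto simp: dconv_def intro: norm_dterm_le\<close>)

lemma has_sum_prod_abs:
  fixes f :: "'i \<Rightarrow> 'a::{real_normed_field,banach}" and g :: "'j \<Rightarrow> 'a"
  assumes f: "(\<lambda>i. norm (f i)) summable_on A" and g: "(\<lambda>j. norm (g j)) summable_on B"
  shows "((\<lambda>(i,j). f i * g j) has_sum (infsum f A * infsum g B)) (A \<times> B)"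
proof -
  have fs: "f summable_on A" using abs_summable_summable[OF f] .
  have gs: "g summable_on B" using abs_summable_summable[OF g] .
  have "(\<lambda>p. norm ((\<lambda>(i,j). f i * g j) p)) summable_on Sigma A (\<lambda>_. B)"
  proof (rule summable_on_SigmaI[where g="\<lambda>i. norm (f i) * infsum (\<lambda>j. norm (g j)) B"])
    show "((\<lambda>y. norm ((\<lambda>(i,j). f i * g j) (x, y))) has_sum norm (f x) * infsum (\<lambda>j. norm (g j)) B) B" for x
      using has_sum_cmult_right[OF has_sum_infsum[OF g], of "norm (f x)"] by (simp add: norm_mult)
    show "(\<lambda>i. norm (f i) * infsum (\<lambda>j. norm (g j)) B) summable_on A"
      by (rule summable_on_cmult_left[OF f])
  qed auto
  hence sm: "(\<lambda>(i,j). f i * g j) summable_on Sigma A (\<lambda>_. B)"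
    by (rule abs_summable_summable)
  show ?thesis
  proof (rule has_sum_SigmaI[where g="\<lambda>i. f i * infsum g B"])
    show "((\<lambda>y. (\<lambda>(i,j). f i * g j) (x, y)) has_sum f x * infsum g B) B" for x
      using has_sum_cmult_right[OF has_sum_infsum[OF gs], of "f x"] by simp
    show "((\<lambda>i. f i * infsum g B) has_sum infsum f A * infsum g B) A"
      by (rule has_sum_cmult_left[OF has_sum_infsum[OF fs]])
  qed (use sm in auto)
qed

definition dmul :: "(nat \<Rightarrow> nat \<Rightarrow> 'a::{real_normed_field,banach}) \<Rightarrow> (nat \<Rightarrow> nat \<Rightarrow> 'a) \<Rightarrow> nat \<Rightarrow> nat \<Rightarrow> 'a" where
  "dmul b c = (\<lambda>K L. \<Sum>i\<le>K. \<Sum>j\<le>L. b i j * c (K-i) (L-j))"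

lemma dmul_has_sum:
  fixes b c :: "nat \<Rightarrow> nat \<Rightarrow> 'a::{real_normed_field,banach}"
  assumes b: "(\<lambda>kl. norm (dterm b x y kl)) summable_on UNIV"
    and c: "(\<lambda>kl. norm (dterm c x y kl)) summable_on UNIV"
  shows "(dterm (dmul b c) x y has_sum (infsum (dterm b x y) UNIV * infsum (dterm c x y) UNIV)) UNIV"
proof -
  define F where "F = infsum (dterm b x y) UNIV * infsum (dterm c x y) UNIV"
  have P: "((\<lambda>(p,q). dterm b x y p * dterm c x y q) has_sum F) (UNIV \<times> UNIV)"
    unfolding F_def by (rule has_sum_prod_abs[OF b c])
  define S where "S = Sigma (UNIV::(nat\<times>nat) set) (\<lambda>(K,L). {..K}\<times>{..L})"
  define gg where "gg = (\<lambda>(KL::nat\<times>nat, ij::nat\<times>nat). b (fst ij) (snd ij) * c (fst KL - fst ij) (snd KL - snd ij) * x^(fst KL) * y^(snd KL))"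
  have "(gg has_sum F) S \<longleftrightarrow> ((\<lambda>(p,q). dterm b x y p * dterm c x y q) has_sum F) (UNIV \<times> UNIV)"
  proof (rule has_sum_reindex_bij_witness[where j="\<lambda>((K,L),(i,j)). ((i,j),(K-i,L-j))"
                                          and i="\<lambda>((i,j),(i',j')). ((i+i',j+j'),(i,j))"])
    fix a assume "a \<in> S"
    then obtain K L i j where a: "a = ((K,L),(i,j))" "i \<le> K" "j \<le> L" unfolding S_def by auto
    show "(case case a of (x, xa) \<Rightarrow> (case x of (K, L) \<Rightarrow> \<lambda>(i, j). ((i, j), K - i, L - j)) xa of
          (x, xa) \<Rightarrow> (case x of (i, j) \<Rightarrow> \<lambda>(i', j'). ((i + i', j + j'), i, j)) xa) = a"
      using a by auto
    show "(case a of (x, xa) \<Rightarrow> (case x of (K, L) \<Rightarrow> \<lambda>(i, j). ((i, j), K - i, L - j)) xa) \<in> UNIV \<times> UNIV"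
      by simp
    have "x ^ K = x ^ i * x ^ (K - i)" "y ^ L = y ^ j * y ^ (L - j)"
      using a by (simp_all add: power_add[symmetric])
    then show "(case case a of (x, xa) \<Rightarrow> (case x of (K, L) \<Rightarrow> \<lambda>(i, j). ((i, j), K - i, L - j)) xa of
          (p, q) \<Rightarrow> dterm b x y p * dterm c x y q) = gg a"
      using a by (simp add: gg_def dterm_def algebra_simps)
  next
    fix bb :: "(nat\<times>nat)\<times>(nat\<times>nat)" assume "bb \<in> UNIV \<times> UNIV"
    obtain i j i' j' where bb: "bb = ((i,j),(i',j'))" by (metis prod.collapse)
    show "(case case bb of (x, xa) \<Rightarrow> (case x of (i, j) \<Rightarrow> \<lambda>(i', j'). ((i + i', j + j'), i, j)) xa of
          (x, xa) \<Rightarrow> (case x of (K, L) \<Rightarrow> \<lambda>(i, j). ((i, j), K - i, L - j)) xa) = bb"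
      using bb by simp
    show "(case bb of (x, xa) \<Rightarrow> (case x of (i, j) \<Rightarrow> \<lambda>(i', j'). ((i + i', j + j'), i, j)) xa) \<in> S"
      using bb by (simp add: S_def)
  qed simp
  with P have G: "(gg has_sum F) S" by simp
  have inner: "((\<lambda>ij. gg (KL, ij)) has_sum (dterm (dmul b c) x y KL)) ((\<lambda>(K,L). {..K}\<times>{..L}) KL)" for KL
  proof -
    obtain K L where KL: "KL = (K,L)" by fastforce
    have "(\<Sum>ij\<in>{..K}\<times>{..L}. gg (KL, ij)) = (\<Sum>i\<le>K. \<Sum>j\<le>L. gg (KL, (i,j)))"
      by (subst sum.cartesian_product) (simp add: case_prod_beta')
    also have "\<dots> = dterm (dmul b c) x y KL"
      by (simp add: KL gg_def dterm_def dmul_def sum_distrib_right)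
    finally have "(\<Sum>ij\<in>{..K}\<times>{..L}. gg (KL, ij)) = dterm (dmul b c) x y KL" .
    then show ?thesis using KL by (auto intro: has_sum_finiteI)
  qed
  have "(dterm (dmul b c) x y has_sum F) UNIV"
    by (rule has_sum_SigmaD[OF G[unfolded S_def]]) (rule inner)
  then show ?thesis unfolding F_def .
qed

lemma dterm_norm_eq: "dterm (\<lambda>k l. norm (b k l)) r r kl = dmaj b r kl"
  by (cases kl) (simp add: dterm_def dmaj_def)

lemma dterm_norm_fun: "dterm (\<lambda>k l. norm (b k l)) r r = dmaj b r"
  by (auto simp: fun_eq_iff dterm_def dmaj_def)

lemma dconv_r0: "dconv b r \<Longrightarrow> norm x \<le> r \<Longrightarrow> 0 \<le> r"
  using norm_ge_zero order_trans by blast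

lemma dmul_conv:
  fixes b c :: "nat \<Rightarrow> nat \<Rightarrow> 'a::{real_normed_field,banach}"
  assumes b: "dconv b r" and c: "dconv c r" and r: "0 \<le> r"
  shows "dconv (dmul b c) r" "dM (dmul b c) r \<le> dM b r * dM c r"
proof -
  define nb where "nb = (\<lambda>k l. norm (b k l))"
  define nc where "nc = (\<lambda>k l. norm (c k l))"
  have nb: "(\<lambda>kl. norm (dterm nb r r kl)) summable_on UNIV"
    using b unfolding dconv_def nb_def
    by (simp add: dterm_norm_eq dmaj_nonneg[OF r])
  have nc: "(\<lambda>kl. norm (dterm nc r r kl)) summable_on UNIV"
    using c unfolding dconv_def nc_def
    by (simp add: dterm_norm_eq dmaj_nonneg[OF r])
  have H: "(dterm (dmul nb nc) r r has_sum (dM b r * dM c r)) UNIV"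
    using dmul_has_sum[OF nb nc]
    by (simp add: nb_def nc_def dterm_norm_fun dM_def)
  have le: "dmaj (dmul b c) r kl \<le> dterm (dmul nb nc) r r kl" for kl
  proof -
    obtain K L where kl: "kl = (K,L)" by fastforce
    have "norm (dmul b c K L) \<le> dmul nb nc K L"
      unfolding dmul_def nb_def nc_def
      by (rule order_trans[OF norm_sum sum_mono], rule order_trans[OF norm_sum sum_mono])
         (simp add: norm_mult)
    then show ?thesis using r
      by (simp add: kl dmaj_def dterm_def mult_right_mono)
  qed
  show cv: "dconv (dmul b c) r"
    unfolding dconv_def
    by (rule summable_on_comparison_test[OF has_sum_imp_summable[OF H]])
       (use le dmaj_nonneg[OF r] in auto)
  have "infsum (dmaj (dmul b c) r) UNIV \<le> dM b r * dM c r"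
    by (rule has_sum_mono[OF has_sum_infsum[OF cv[unfolded dconv_def]] H]) (rule le)
  then show "dM (dmul b c) r \<le> dM b r * dM c r" by (simp add: dM_def)
qed

lemma dmul_sum:
  assumes "dconv b r" "dconv c r" "norm x \<le> r" "norm y \<le> r"
  shows "dsr (dmul b c) x y = dsr b x y * dsr c x y"
proof -
  have "(dterm (dmul b c) x y has_sum (dsr b x y * dsr c x y)) UNIV"
    unfolding dsr_def by (rule dmul_has_sum) (use dconv_abs assms in auto)
  then show ?thesis unfolding dsr_def by (rule infsumI)
qed

definition dunit :: "nat \<Rightarrow> nat \<Rightarrow> 'a::{real_normed_field,banach}" where
  "dunit = (\<lambda>k l. if k = 0 \<and> l = 0 then 1 else 0)"

lemma done_has_sum: "(dterm dunit x y has_sum 1) UNIV"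
  by (rule has_sum_finite_neutralI[where B="{(0,0)}"]) (auto simp: dterm_def dunit_def split: if_splits)

lemma done_dmaj_has_sum: "(dmaj (dunit::nat \<Rightarrow> nat \<Rightarrow> 'a::{real_normed_field,banach}) r has_sum 1) UNIV"
  by (rule has_sum_finite_neutralI[where B="{(0,0)}"]) (auto simp: dmaj_def dunit_def split: if_splits)

lemma done_conv: "dconv (dunit::nat \<Rightarrow> nat \<Rightarrow> 'a::{real_normed_field,banach}) r" "dM (dunit::nat \<Rightarrow> nat \<Rightarrow> 'a) r = 1"
  "dsr (dunit::nat \<Rightarrow> nat \<Rightarrow> 'a::{real_normed_field,banach}) x y = 1"
  using done_dmaj_has_sum[where 'a='a] done_has_sum[of x y]
  by (auto simp: dconv_def dM_def dsr_def intro: has_sum_imp_summable infsumI)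

definition dadd :: "(nat \<Rightarrow> nat \<Rightarrow> 'a::{real_normed_field,banach}) \<Rightarrow> (nat \<Rightarrow> nat \<Rightarrow> 'a) \<Rightarrow> nat \<Rightarrow> nat \<Rightarrow> 'a" where
  "dadd b c = (\<lambda>k l. b k l + c k l)"

definition dscal :: "'a \<Rightarrow> (nat \<Rightarrow> nat \<Rightarrow> 'a::{real_normed_field,banach}) \<Rightarrow> nat \<Rightarrow> nat \<Rightarrow> 'a" where
  "dscal a b = (\<lambda>k l. a * b k l)"

lemma dadd_conv:
  assumes b: "dconv b r" and c: "dconv c r" and r: "0 \<le> r"
  shows "dconv (dadd b c) r"
  unfolding dconv_def
proof (rule summable_on_comparison_test[where f="\<lambda>kl. dmaj b r kl + dmaj c r kl"])
  show "(\<lambda>kl. dmaj b r kl + dmaj c r kl) summable_on UNIV"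
    using b c unfolding dconv_def by (rule summable_on_add)
  show "dmaj (dadd b c) r kl \<le> dmaj b r kl + dmaj c r kl" for kl
  proof (cases kl)
    case (Pair k l)
    have "norm (b k l + c k l) * r^k * r^l \<le> (norm (b k l) + norm (c k l)) * r^k * r^l"
      using r by (intro mult_right_mono norm_triangle_ineq) auto
    then show ?thesis by (simp add: Pair dmaj_def dadd_def algebra_simps)
  qed
qed (rule dmaj_nonneg[OF r])

lemma dadd_sum:
  assumes "dconv b r" "dconv c r" "norm x \<le> r" "norm y \<le> r"
  shows "dsr (dadd b c) x y = dsr b x y + dsr c x y"
proof -
  have "((\<lambda>kl. dterm b x y kl + dterm c x y kl) has_sum (dsr b x y + dsr c x y)) UNIV"
    by (rule has_sum_add[OF dconv_has_sum[OF assms(1,3,4)] dconv_has_sum[OF assms(2,3,4)]])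
  moreover have "(\<lambda>kl. dterm b x y kl + dterm c x y kl) = dterm (dadd b c) x y"
    by (auto simp: dterm_def dadd_def algebra_simps fun_eq_iff)
  ultimately show ?thesis unfolding dsr_def by (metis infsumI)
qed

lemma dscal_conv:
  assumes b: "dconv b r"
  shows "dconv (dscal a b) r"
proof -
  have "dmaj (dscal a b) r = (\<lambda>kl. norm a * dmaj b r kl)"
    by (auto simp: dmaj_def dscal_def norm_mult fun_eq_iff)
  then show ?thesis using b unfolding dconv_def by (simp add: summable_on_cmult_right)
qed

lemma dscal_sum:
  assumes "dconv b r" "norm x \<le> r" "norm y \<le> r"
  shows "dsr (dscal a b) x y = a * dsr b x y"
proof -
  have "((\<lambda>kl. a * dterm b x y kl) has_sum (a * dsr b x y)) UNIV"
    by (rule has_sum_cmult_right[OF dconv_has_sum[OF assms]])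
  moreover have "(\<lambda>kl. a * dterm b x y kl) = dterm (dscal a b) x y"
    by (auto simp: dterm_def dscal_def algebra_simps fun_eq_iff)
  ultimately show ?thesis unfolding dsr_def by (metis infsumI)
qed

lemma dfin_conv_sum:
  assumes "finite S" "\<And>s. s \<in> S \<Longrightarrow> dconv (B s) r" "0 \<le> r"
  shows "dconv (\<lambda>k l. \<Sum>s\<in>S. B s k l) r \<and>
         (\<forall>x y. norm x \<le> r \<longrightarrow> norm y \<le> r \<longrightarrow> dsr (\<lambda>k l. \<Sum>s\<in>S. B s k l) x y = (\<Sum>s\<in>S. dsr (B s) x y))"
  using assms
proof (induction S rule: finite_induct)
  case empty
  have z: "(\<lambda>k l. \<Sum>s\<in>{}. B s k l) = dscal 0 dunit" by (simp add: dscal_def fun_eq_iff)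
  show ?case unfolding z using dscal_conv[OF done_conv(1)]
    by (auto simp: dscal_sum[OF done_conv(1)])
next
  case (insert s S)
  have e: "(\<lambda>k l. \<Sum>s\<in>insert s S. B s k l) = dadd (B s) (\<lambda>k l. \<Sum>s\<in>S. B s k l)"
    using insert.hyps by (simp add: dadd_def fun_eq_iff)
  have cS: "dconv (\<lambda>k l. \<Sum>s\<in>S. B s k l) r" and sS: "\<And>x y. norm x \<le> r \<Longrightarrow> norm y \<le> r \<Longrightarrow>
      dsr (\<lambda>k l. \<Sum>s\<in>S. B s k l) x y = (\<Sum>s\<in>S. dsr (B s) x y)"
    using insert.IH insert.prems by auto
  have cs: "dconv (B s) r" using insert.prems by auto
  show ?case unfolding e
    using dadd_conv[OF cs cS insert.prems(2)] dadd_sum[OF cs cS] sS insert.hyps by auto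
qed

primrec dpow :: "(nat \<Rightarrow> nat \<Rightarrow> 'a::{real_normed_field,banach}) \<Rightarrow> nat \<Rightarrow> nat \<Rightarrow> nat \<Rightarrow> 'a" where
  "dpow u 0 = dunit"
| "dpow u (Suc j) = dmul u (dpow u j)"

lemma dM_nonneg: "0 \<le> r \<Longrightarrow> 0 \<le> dM b r"
  unfolding dM_def by (rule infsum_nonneg) (rule dmaj_nonneg)

lemma dpow_props:
  assumes u: "dconv u r" and r: "0 \<le> r"
  shows "dconv (dpow u j) r \<and> dM (dpow u j) r \<le> dM u r ^ j \<and>
         (\<forall>x y. norm x \<le> r \<longrightarrow> norm y \<le> r \<longrightarrow> dsr (dpow u j) x y = dsr u x y ^ j)"
proof (induction j)
  case 0
  then show ?case by (simp add: done_conv)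
next
  case (Suc j)
  then have c: "dconv (dpow u j) r" and m: "dM (dpow u j) r \<le> dM u r ^ j"
    and s: "\<And>x y. norm x \<le> r \<Longrightarrow> norm y \<le> r \<Longrightarrow> dsr (dpow u j) x y = dsr u x y ^ j" by auto
  have "dM (dpow u (Suc j)) r \<le> dM u r * dM (dpow u j) r"
    using dmul_conv(2)[OF u c r] by simp
  also have "\<dots> \<le> dM u r * dM u r ^ j"
    by (rule mult_left_mono[OF m dM_nonneg[OF r]])
  finally show ?case
    using dmul_conv(1)[OF u c r] dmul_sum[OF u c] s by simp
qed

lemma dgeom:
  assumes u: "dconv u r" and r: "0 < r" and M: "dM u r < 1"
  defines "w \<equiv> (\<lambda>k l. infsum (\<lambda>j. dpow u j k l) UNIV)"
  shows "dconv w r \<and> (\<forall>x y. norm x \<le> r \<longrightarrow> norm y \<le> r \<longrightarrow>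
           norm (dsr u x y) < 1 \<and> dsr w x y = 1 / (1 - dsr u x y))"
proof -
  have r0: "0 \<le> r" using r by simp
  define Psi where "Psi = (\<lambda>(j::nat, kl::nat\<times>nat). dmaj (dpow u j) r kl)"
  have Psi_nn: "0 \<le> Psi p" for p by (cases p) (simp add: Psi_def dmaj_nonneg[OF r0])
  have geo: "(\<lambda>j. dM u r ^ j) summable_on UNIV"
    by (rule summable_nonneg_imp_summable_on[OF summable_geometric])
       (use M dM_nonneg[OF r0, of u] in auto)
  have PsiS: "Psi summable_on UNIV \<times> UNIV"
  proof (rule summable_on_SigmaI[where g="\<lambda>j. dM (dpow u j) r"])
    show "((\<lambda>y. Psi (j, y)) has_sum dM (dpow u j) r) UNIV" for j
      using dpow_props[OF u r0, of j] unfolding Psi_def dconv_def dM_def by simp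
    show "(\<lambda>j. dM (dpow u j) r) summable_on UNIV"
      by (rule summable_on_comparison_test[OF geo])
         (use dpow_props[OF u r0] dM_nonneg[OF r0] in auto)
  qed (use Psi_nn in auto)
  have PsiS': "(\<lambda>(kl,j). Psi (j,kl)) summable_on UNIV \<times> UNIV"
    using PsiS summable_on_swap by blast
  have psi_inner: "(\<lambda>j. Psi (j,kl)) summable_on UNIV" for kl
    using summable_on_SigmaD1[of "\<lambda>kl j. Psi (j,kl)" UNIV "\<lambda>_. UNIV" kl] PsiS'
    by (simp add: case_prod_unfold)
  have inner_sm: "(\<lambda>j. dpow u j k l) summable_on UNIV" for k l
  proof -
    have "(\<lambda>j. Psi (j,(k,l))) summable_on UNIV"
      using summable_on_SigmaD1[of "\<lambda>kl j. Psi (j,kl)" UNIV "\<lambda>_. UNIV" "(k,l)"] PsiS'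
      by (simp add: case_prod_unfold)
    then have "(\<lambda>j. Psi (j,(k,l)) / (r^k * r^l)) summable_on UNIV"
      unfolding divide_inverse by (rule summable_on_cmult_left)
    moreover have "Psi (j,(k,l)) / (r^k * r^l) = norm (dpow u j k l)" for j
      using r by (simp add: Psi_def dmaj_def)
    ultimately show ?thesis by (simp add: abs_summable_summable)
  qed
  have main: "norm (dsr u x y) < 1 \<and> dsr w x y = 1 / (1 - dsr u x y)"
    if x: "norm x \<le> r" and y: "norm y \<le> r" for x y
  proof -
    define s where "s = dsr u x y"
    have sn: "norm s < 1" using dsr_norm_le[OF u x y] M unfolding s_def by simp
    define Phi where "Phi = (\<lambda>(j::nat, kl::nat\<times>nat). dterm (dpow u j) x y kl)"
    have "(\<lambda>p. norm (Phi p)) summable_on UNIV \<times> UNIV"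
      by (rule summable_on_comparison_test[OF PsiS])
         (auto simp: Phi_def Psi_def intro: norm_dterm_le[OF x y])
    then have PhiS: "Phi summable_on UNIV \<times> UNIV" by (rule abs_summable_summable)
    define T where "T = infsum Phi (UNIV \<times> UNIV)"
    have PhiH: "(Phi has_sum T) (UNIV \<times> UNIV)" using PhiS unfolding T_def by simp
    have "((\<lambda>j. s ^ j) has_sum T) UNIV"
    proof (rule has_sum_SigmaD[OF PhiH])
      show "((\<lambda>kl. Phi (j, kl)) has_sum s ^ j) UNIV" if "j \<in> UNIV" for j
        using dconv_has_sum[OF conjunct1[OF dpow_props[OF u r0, of j]] x y]
          dpow_props[OF u r0, of j] x y unfolding Phi_def s_def by simp
    qed
    moreover have "((\<lambda>j. s ^ j) has_sum 1 / (1 - s)) UNIV"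
      by (rule norm_summable_imp_has_sum[OF _ geometric_sums[OF sn]])
         (use summable_geometric[of "norm s"] sn in \<open>simp add: norm_power\<close>)
    ultimately have T1: "T = 1 / (1 - s)" using has_sum_unique by blast
    have PhiH': "((\<lambda>(kl,j). Phi (j,kl)) has_sum T) (UNIV \<times> UNIV)"
      using PhiH has_sum_swap by blast
    have "(dterm w x y has_sum T) UNIV"
    proof (rule has_sum_SigmaD[OF PhiH'])
      fix kl :: "nat \<times> nat"
      obtain k l where kl: "kl = (k,l)" by fastforce
      have "((\<lambda>j. dpow u j k l * x^k * y^l) has_sum w k l * x^k * y^l) UNIV"
        unfolding w_def
        by (rule has_sum_cmult_left[OF has_sum_cmult_left[OF has_sum_infsum[OF inner_sm]]])
      then show "((\<lambda>j. (\<lambda>(kl,j). Phi (j,kl)) (kl, j)) has_sum dterm w x y kl) UNIV"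
        by (simp add: kl Phi_def dterm_def)
    qed
    then have "dsr w x y = T" unfolding dsr_def by (rule infsumI)
    then show ?thesis using T1 sn unfolding s_def by simp
  qed
  have wconv: "dconv w r"
    unfolding dconv_def
  proof (rule summable_on_comparison_test)
    show "(\<lambda>kl. infsum (\<lambda>j. Psi (j,kl)) UNIV) summable_on UNIV"
      using summable_on_SigmaD[OF PsiS'[unfolded case_prod_unfold]] psi_inner
      by (simp add: case_prod_unfold)
    show "dmaj w r kl \<le> infsum (\<lambda>j. Psi (j,kl)) UNIV" for kl
    proof -
      obtain k l where kl: "kl = (k,l)" by fastforce
      have sm: "(\<lambda>j. norm (dpow u j k l)) summable_on UNIV"
      proof -
        have "(\<lambda>j. Psi (j,(k,l))) summable_on UNIV"
          using summable_on_SigmaD1[of "\<lambda>kl j. Psi (j,kl)" UNIV "\<lambda>_. UNIV" "(k,l)"] PsiS'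
          by (simp add: case_prod_unfold)
        then have "(\<lambda>j. Psi (j,(k,l)) / (r^k * r^l)) summable_on UNIV"
          unfolding divide_inverse by (rule summable_on_cmult_left)
        moreover have "Psi (j,(k,l)) / (r^k * r^l) = norm (dpow u j k l)" for j
          using r by (simp add: Psi_def dmaj_def)
        ultimately show ?thesis by simp
      qed
      have "norm (w k l) \<le> infsum (\<lambda>j. norm (dpow u j k l)) UNIV"
        unfolding w_def
        by (rule norm_infsum_le[OF has_sum_infsum[OF inner_sm] has_sum_infsum[OF sm]]) simp
      then have "norm (w k l) * r^k * r^l \<le> infsum (\<lambda>j. norm (dpow u j k l)) UNIV * r^k * r^l"
        using r0 by (intro mult_right_mono) auto
      also have "\<dots> = infsum (\<lambda>j. norm (dpow u j k l) * r^k * r^l) UNIV"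
        by (simp add: infsum_cmult_left[OF ] sm mult.assoc)
      finally show ?thesis by (simp add: kl dmaj_def Psi_def)
    qed
    show "0 \<le> dmaj w r kl" for kl by (rule dmaj_nonneg[OF r0])
  qed
  show ?thesis using wconv main by blast
qed

lemma pow_le_self: "0 \<le> (q::real) \<Longrightarrow> q \<le> 1 \<Longrightarrow> 1 \<le> n \<Longrightarrow> q ^ n \<le> q"
  using power_decreasing[of 1 n q] by simp

lemma drecip:
  fixes d :: "nat \<Rightarrow> nat \<Rightarrow> 'a::{real_normed_field,banach}"
  assumes d: "dconv d r0" and r0: "0 < r0" and d0: "d 0 0 \<noteq> 0"
  shows "\<exists>r>0. r \<le> r0 \<and> (\<exists>e. dconv e r \<and> (\<forall>x y. norm x \<le> r \<longrightarrow> norm y \<le> r \<longrightarrow>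
            dsr d x y \<noteq> 0 \<and> dsr e x y = 1 / dsr d x y))"
proof -
  define u where "u = (\<lambda>k l. if k = 0 \<and> l = 0 then 0 else - d k l / d 0 0)"
  have uc0: "dconv u r0"
    unfolding dconv_def
  proof (rule summable_on_comparison_test)
    show "(\<lambda>kl. inverse (norm (d 0 0)) * dmaj d r0 kl) summable_on UNIV"
      using d unfolding dconv_def by (rule summable_on_cmult_right)
    show "dmaj u r0 kl \<le> inverse (norm (d 0 0)) * dmaj d r0 kl" for kl
    proof (cases kl)
      case (Pair k l)
      then show ?thesis using r0 d0
        by (auto simp: u_def dmaj_def norm_divide divide_inverse mult_ac dmaj_nonneg norm_mult norm_inverse)
    qed
    show "0 \<le> dmaj u r0 kl" for kl using r0 by (simp add: dmaj_nonneg)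
  qed
  define M0 where "M0 = dM u r0"
  have M0: "0 \<le> M0" unfolding M0_def using dM_nonneg[of r0 u] r0 by simp
  define r where "r = r0 / (M0 + 2)"
  have r: "0 < r" "r \<le> r0" using r0 M0 by (auto simp: r_def field_simps)
  define q where "q = r / r0"
  have q: "0 \<le> q" "q \<le> 1" using r r0 by (auto simp: q_def field_simps)
  have uc: "dconv u r" using dconv_mono[OF uc0] r by simp
  have le: "dmaj u r kl \<le> q * dmaj u r0 kl" for kl
  proof (cases kl)
    case (Pair k l)
    show ?thesis
    proof (cases "k = 0 \<and> l = 0")
      case True then show ?thesis by (simp add: Pair dmaj_def u_def)
    next
      case False
      then have "1 \<le> k + l" by auto
      have "r ^ k * r ^ l = q ^ (k + l) * (r0 ^ k * r0 ^ l)"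
        using r0 by (simp add: q_def power_add[symmetric] power_divide)
      also have "\<dots> \<le> q * (r0 ^ k * r0 ^ l)"
        using pow_le_self[OF q \<open>1 \<le> k + l\<close>] r0 by (intro mult_right_mono) auto
      finally have "norm (u k l) * (r ^ k * r ^ l) \<le> norm (u k l) * (q * (r0 ^ k * r0 ^ l))"
        by (intro mult_left_mono) auto
      then show ?thesis by (simp add: Pair dmaj_def mult_ac)
    qed
  qed
  have "dM u r \<le> q * M0"
    unfolding dM_def M0_def
    by (rule has_sum_mono[OF has_sum_infsum[OF uc[unfolded dconv_def]]
          has_sum_cmult_right[OF has_sum_infsum[OF uc0[unfolded dconv_def]]]]) (rule le)
  also have "q * M0 < 1"
  proof -
    have "q = 1 / (M0 + 2)" using r0 M0 by (simp add: q_def r_def)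
    then have "q * M0 = M0 / (M0 + 2)" by simp
    also have "\<dots> < 1" using M0 by (simp add: divide_less_eq)
    finally show ?thesis .
  qed
  finally have Mu: "dM u r < 1" .
  define w where "w = (\<lambda>k l. infsum (\<lambda>j. dpow u j k l) UNIV)"
  from dgeom[OF uc r(1) Mu] have wc: "dconv w r"
    and ws: "\<And>x y. norm x \<le> r \<Longrightarrow> norm y \<le> r \<Longrightarrow> norm (dsr u x y) < 1 \<and> dsr w x y = 1 / (1 - dsr u x y)"
    unfolding w_def by auto
  define e where "e = dscal (1 / d 0 0) w"
  have ec: "dconv e r" unfolding e_def by (rule dscal_conv[OF wc])
  have dr: "dconv d r" using dconv_mono[OF d] r by simp
  have deq: "d = dadd (dscal (d 0 0) dunit) (dscal (- d 0 0) u)"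
    using d0 by (auto simp: fun_eq_iff dadd_def dscal_def dunit_def u_def)
  have "dsr d x y \<noteq> 0 \<and> dsr e x y = 1 / dsr d x y" if x: "norm x \<le> r" and y: "norm y \<le> r" for x y
  proof -
    have "dsr d x y = d 0 0 * 1 + (- d 0 0) * dsr u x y"
      apply (subst deq)
      apply (subst dadd_sum[OF dscal_conv[OF done_conv(1)] dscal_conv[OF uc] x y])
      by (simp add: dscal_sum[OF done_conv(1) x y] dscal_sum[OF uc x y] done_conv)
    then have d1: "dsr d x y = d 0 0 * (1 - dsr u x y)" by (simp add: algebra_simps)
    from ws[OF x y] have n1: "norm (dsr u x y) < 1" and w1: "dsr w x y = 1 / (1 - dsr u x y)" by auto
    have ne: "1 - dsr u x y \<noteq> 0" using n1 by auto
    show ?thesis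
      using d1 ne d0 unfolding e_def by (simp add: dscal_sum[OF wc x y] w1)
  qed
  then show ?thesis using r ec by blast
qed

definition dX :: "(nat \<Rightarrow> 'a) \<Rightarrow> nat \<Rightarrow> nat \<Rightarrow> 'a::{real_normed_field,banach}" where
  "dX h = (\<lambda>k l. if l = 0 then h k else 0)"

definition dY :: "(nat \<Rightarrow> 'a) \<Rightarrow> nat \<Rightarrow> nat \<Rightarrow> 'a::{real_normed_field,banach}" where
  "dY h = (\<lambda>k l. if k = 0 then h l else 0)"

lemma has_sum_X:
  fixes h :: "nat \<Rightarrow> 'b::{comm_monoid_add,topological_space}"
  assumes "(h has_sum S) UNIV"
  shows "((\<lambda>(k::nat,l::nat). if l = 0 then h k else 0) has_sum S) UNIV"
proof -
  let ?g = "(\<lambda>(k::nat,l::nat). if l = 0 then h k else 0)"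
  have "inj_on (\<lambda>k::nat. (k,0::nat)) UNIV" by (auto simp: inj_on_def)
  from has_sum_reindex[OF this, of ?g S] assms
  have "(?g has_sum S) (range (\<lambda>k. (k,0)))" by (simp add: o_def)
  moreover have "(?g has_sum S) (range (\<lambda>k. (k,0))) \<longleftrightarrow> (?g has_sum S) UNIV"
    by (rule has_sum_cong_neutral) auto
  ultimately show ?thesis by blast
qed

lemma has_sum_Y:
  fixes h :: "nat \<Rightarrow> 'b::{comm_monoid_add,topological_space}"
  assumes "(h has_sum S) UNIV"
  shows "((\<lambda>(k::nat,l::nat). if k = 0 then h l else 0) has_sum S) UNIV"
proof -
  let ?g = "(\<lambda>(k::nat,l::nat). if k = 0 then h l else 0)"
  have "inj_on (\<lambda>l::nat. (0::nat,l)) UNIV" by (auto simp: inj_on_def)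
  from has_sum_reindex[OF this, of ?g S] assms
  have "(?g has_sum S) (range (\<lambda>l. (0,l)))" by (simp add: o_def)
  moreover have "(?g has_sum S) (range (\<lambda>l. (0,l))) \<longleftrightarrow> (?g has_sum S) UNIV"
    by (rule has_sum_cong_neutral) auto
  ultimately show ?thesis by blast
qed

lemma dmaj_X: "dmaj (dX h) r = (\<lambda>(k::nat,l::nat). if l = 0 then norm (h k) * r^k else 0)"
  by (auto simp: fun_eq_iff dmaj_def dX_def)
lemma dterm_X: "dterm (dX h) x y = (\<lambda>(k::nat,l::nat). if l = 0 then h k * x^k else 0)"
  by (auto simp: fun_eq_iff dterm_def dX_def)
lemma dmaj_Y: "dmaj (dY h) r = (\<lambda>(k::nat,l::nat). if k = 0 then norm (h l) * r^l else 0)"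
  by (auto simp: fun_eq_iff dmaj_def dY_def)
lemma dterm_Y: "dterm (dY h) x y = (\<lambda>(k::nat,l::nat). if k = 0 then h l * y^l else 0)"
  by (auto simp: fun_eq_iff dterm_def dY_def)

lemma dX_props:
  fixes h :: "nat \<Rightarrow> 'a::{real_normed_field,banach}"
  assumes sm: "summable (\<lambda>k. norm (h k) * r^k)" and r: "0 \<le> r"
  shows "dconv (dX h) r" "norm x \<le> r \<Longrightarrow> dsr (dX h) x y = (\<Sum>k. h k * x^k)"
proof -
  have "((\<lambda>k. norm (h k) * r^k) has_sum (\<Sum>k. norm (h k) * r^k)) UNIV"
    by (rule sums_nonneg_imp_has_sum[OF summable_sums[OF sm]]) (use r in simp)
  then have "(dmaj (dX h) r has_sum (\<Sum>k. norm (h k) * r^k)) UNIV"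
    using has_sum_X[of "\<lambda>k. norm (h k) * r^k"]
    by (metis (no_types) dmaj_X)
  then show "dconv (dX h) r" unfolding dconv_def by (rule has_sum_imp_summable)
  assume x: "norm x \<le> r"
  have ns: "summable (\<lambda>k. norm (h k * x^k))"
    by (rule summable_comparison_test'[OF sm])
       (use x r in \<open>auto simp: norm_mult norm_power intro!: mult_left_mono power_mono\<close>)
  have "((\<lambda>k. h k * x^k) has_sum (\<Sum>k. h k * x^k)) UNIV"
    by (rule norm_summable_imp_has_sum[OF ns summable_sums]) (rule summable_norm_cancel[OF ns])
  then have "(dterm (dX h) x y has_sum (\<Sum>k. h k * x^k)) UNIV"
    using has_sum_X[of "\<lambda>k. h k * x^k"]
    by (metis (no_types) dterm_X)
  then show "dsr (dX h) x y = (\<Sum>k. h k * x^k)" unfolding dsr_def by (rule infsumI)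
qed

lemma dY_props:
  fixes h :: "nat \<Rightarrow> 'a::{real_normed_field,banach}"
  assumes sm: "summable (\<lambda>k. norm (h k) * r^k)" and r: "0 \<le> r"
  shows "dconv (dY h) r" "norm y \<le> r \<Longrightarrow> dsr (dY h) x y = (\<Sum>k. h k * y^k)"
proof -
  have "((\<lambda>k. norm (h k) * r^k) has_sum (\<Sum>k. norm (h k) * r^k)) UNIV"
    by (rule sums_nonneg_imp_has_sum[OF summable_sums[OF sm]]) (use r in simp)
  then have "(dmaj (dY h) r has_sum (\<Sum>k. norm (h k) * r^k)) UNIV"
    using has_sum_Y[of "\<lambda>k. norm (h k) * r^k"]
    by (metis (no_types) dmaj_Y)
  then show "dconv (dY h) r" unfolding dconv_def by (rule has_sum_imp_summable)
  assume y: "norm y \<le> r"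
  have ns: "summable (\<lambda>k. norm (h k * y^k))"
    by (rule summable_comparison_test'[OF sm])
       (use y r in \<open>auto simp: norm_mult norm_power intro!: mult_left_mono power_mono\<close>)
  have "((\<lambda>k. h k * y^k) has_sum (\<Sum>k. h k * y^k)) UNIV"
    by (rule norm_summable_imp_has_sum[OF ns summable_sums]) (rule summable_norm_cancel[OF ns])
  then have "(dterm (dY h) x y has_sum (\<Sum>k. h k * y^k)) UNIV"
    using has_sum_Y[of "\<lambda>k. h k * y^k"]
    by (metis (no_types) dterm_Y)
  then show "dsr (dY h) x y = (\<Sum>k. h k * y^k)" unfolding dsr_def by (rule infsumI)
qed

lemma fact_aux: "of_nat (Suc n) * (A / fact (Suc n)) = (A / fact n :: real)"
proof -
  have f: "fact (Suc n) = (of_nat (Suc n)::real) * fact n" by (rule fact_Suc)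
  show ?thesis by (simp only: f) (simp del: of_nat_Suc fact_Suc)
qed

lemma diffs_iter: "(diffs ^^ j) c n = (fact (n + j) / fact n) * (c (n + j) :: real)"
proof (induction j arbitrary: n)
  case 0
  then show ?case by simp
next
  case (Suc j)
  have "(diffs ^^ Suc j) c n = of_nat (Suc n) * (diffs ^^ j) c (Suc n)"
    by (simp add: diffs_def)
  also have "\<dots> = of_nat (Suc n) * (fact (Suc n + j) / fact (Suc n)) * c (Suc n + j)"
    using Suc by simp
  also have "\<dots> = (fact (Suc n + j) / fact n) * c (Suc n + j)"
    by (simp only: fact_aux mult.assoc[symmetric])
  also have "\<dots> = (fact (n + Suc j) / fact n) * c (n + Suc j)"
    by simp
  finally show ?case .
qed

lemma ps_deriv:
  fixes \<beta> :: "nat \<Rightarrow> real"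
  assumes sm: "\<And>x. \<bar>x\<bar> < K \<Longrightarrow> summable (\<lambda>n. \<beta> n * x^n)"
  shows "(\<forall>x. \<bar>x\<bar> < K \<longrightarrow> summable (\<lambda>n. (diffs^^j) \<beta> n * x^n)) \<and>
         (\<forall>x. \<bar>x\<bar> < K \<longrightarrow> (deriv^^j) (\<lambda>x. \<Sum>n. \<beta> n * x^n) x = (\<Sum>n. (diffs^^j) \<beta> n * x^n))"
proof (induction j)
  case 0
  then show ?case using sm by simp
next
  case (Suc j)
  then have s: "\<And>x. \<bar>x\<bar> < K \<Longrightarrow> summable (\<lambda>n. (diffs^^j) \<beta> n * x^n)"
    and d: "\<And>x. \<bar>x\<bar> < K \<Longrightarrow> (deriv^^j) (\<lambda>x. \<Sum>n. \<beta> n * x^n) x = (\<Sum>n. (diffs^^j) \<beta> n * x^n)"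
    by auto
  have s2: "summable (\<lambda>n. (diffs^^Suc j) \<beta> n * x^n)" if x: "\<bar>x\<bar> < K" for x
    using termdiff_converges[of x K "(diffs^^j) \<beta>"] s x by simp
  have d2: "(deriv^^Suc j) (\<lambda>x. \<Sum>n. \<beta> n * x^n) x = (\<Sum>n. (diffs^^Suc j) \<beta> n * x^n)"
    if x: "\<bar>x\<bar> < K" for x
  proof -
    have ev: "eventually (\<lambda>z. (deriv^^j) (\<lambda>x. \<Sum>n. \<beta> n * x^n) z = (\<Sum>n. (diffs^^j) \<beta> n * z^n)) (nhds x)"
    proof (rule eventually_mono[OF eventually_nhds_in_open[of "ball 0 K" x]])
      show "x \<in> ball 0 K" using x by (simp add: dist_real_def)
    qed (auto simp: dist_real_def intro: d)
    have "(deriv^^Suc j) (\<lambda>x. \<Sum>n. \<beta> n * x^n) x = deriv ((deriv^^j) (\<lambda>x. \<Sum>n. \<beta> n * x^n)) x"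
      by simp
    also have "\<dots> = deriv (\<lambda>z. \<Sum>n. (diffs^^j) \<beta> n * z^n) x"
      by (rule deriv_cong_ev[OF ev refl])
    also have "\<dots> = (\<Sum>n. diffs ((diffs^^j) \<beta>) n * x^n)"
      by (rule DERIV_imp_deriv, rule termdiffs_strong'[of K]) (use s x in auto)
    finally show ?thesis by simp
  qed
  show ?case using s2 d2 by blast
qed

lemma taylor1:
  fixes \<beta> :: "nat \<Rightarrow> real" and g :: "real \<Rightarrow> real"
  assumes K: "0 < K"
    and sm: "\<And>x. \<bar>x\<bar> < K \<Longrightarrow> summable (\<lambda>n. \<beta> n * x^n)"
    and g: "\<And>x. \<bar>x\<bar> < K \<Longrightarrow> g x = (\<Sum>n. \<beta> n * x^n)"
  shows "(deriv^^j) g 0 = fact j * \<beta> j"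
proof -
  have ev: "eventually (\<lambda>z. g z = (\<Sum>n. \<beta> n * z^n)) (nhds 0)"
  proof (rule eventually_mono[OF eventually_nhds_in_open[of "ball 0 K" 0]])
    show "0 \<in> ball 0 K" using K by simp
  qed (auto simp: dist_real_def intro: g)
  have "(deriv^^j) g 0 = (deriv^^j) (\<lambda>z. \<Sum>n. \<beta> n * z^n) 0"
    by (rule higher_deriv_cong_ev[OF ev refl])
  also have "\<dots> = (\<Sum>n. (diffs^^j) \<beta> n * 0^n)"
    using conjunct2[OF ps_deriv[where K=K and \<beta>=\<beta> and j=j, OF sm]] K by simp
  also have "\<dots> = (diffs^^j) \<beta> 0" by (rule powser_zero)
  also have "\<dots> = fact j * \<beta> j" by (simp add: diffs_iter)
  finally show ?thesis .
qed

lemma dconv_row: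
  fixes C :: "nat \<Rightarrow> nat \<Rightarrow> real"
  assumes c: "dconv C r" and r: "0 < r"
  shows "summable (\<lambda>k. \<bar>C k l\<bar> * r^k)"
proof -
  have "(\<lambda>(l,k). dmaj C r (k,l)) summable_on UNIV \<times> UNIV"
    using c unfolding dconv_def using summable_on_swap[of "dmaj C r" UNIV UNIV] by simp
  then have "(\<lambda>k. dmaj C r (k,l)) summable_on UNIV"
    using summable_on_SigmaD1[of "\<lambda>l k. dmaj C r (k,l)" UNIV "\<lambda>_. UNIV" l]
    by (simp add: case_prod_unfold)
  then have "(\<lambda>k. dmaj C r (k,l) * inverse (r^l)) summable_on UNIV"
    by (rule summable_on_cmult_left)
  moreover have "dmaj C r (k,l) * inverse (r^l) = \<bar>C k l\<bar> * r^k" for k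
    using r by (simp add: dmaj_def)
  ultimately have "(\<lambda>k. \<bar>C k l\<bar> * r^k) summable_on UNIV" by simp
  then show ?thesis
    by (subst summable_on_UNIV_nonneg_real_iff[symmetric]) (use r in auto)
qed

lemma row_summable:
  fixes C :: "nat \<Rightarrow> nat \<Rightarrow> real"
  assumes c: "dconv C r" and r: "0 < r" and x: "\<bar>x\<bar> \<le> r"
  shows "summable (\<lambda>k. \<bar>C k l * x^k\<bar>)"
  by (rule summable_comparison_test'[OF dconv_row[OF c r, of l]])
     (use x in \<open>auto simp: abs_mult power_abs intro!: mult_left_mono power_mono\<close>)

lemma taylor2_id:
  fixes C :: "nat \<Rightarrow> nat \<Rightarrow> real" and f :: "real \<Rightarrow> real \<Rightarrow> real"
  assumes c: "dconv C r" and r: "0 < r"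
    and f: "\<And>x y. \<bar>x\<bar> < r \<Longrightarrow> \<bar>y\<bar> < r \<Longrightarrow> f x y = dsr C x y"
  shows "taylor2 f k l = C k l"
proof -
  define B where "B = (\<lambda>l x. \<Sum>k. C k l * x^k)"
  have rows: "(\<lambda>l. B l x * y^l) sums f x y" if x: "\<bar>x\<bar> < r" and y: "\<bar>y\<bar> < r" for x y
  proof -
    have H: "(dterm C x y has_sum f x y) (UNIV \<times> UNIV)"
      using dconv_has_sum[OF c] x y f[OF x y] by simp
    have H': "((\<lambda>(l,k). dterm C x y (k,l)) has_sum f x y) (UNIV \<times> UNIV)"
      using has_sum_swap[THEN iffD1, OF H] .
    have "((\<lambda>l. B l x * y^l) has_sum f x y) UNIV"
    proof (rule has_sum_SigmaD[OF H'])
      fix l :: nat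
      have ns: "summable (\<lambda>k. norm (C k l * x^k))"
        using row_summable[OF c r, of x l] x by simp
      have "((\<lambda>k. C k l * x^k) has_sum B l x) UNIV"
        unfolding B_def by (rule norm_summable_imp_has_sum[OF ns summable_sums[OF summable_norm_cancel[OF ns]]])
      from has_sum_cmult_left[OF this, of "y^l"]
      show "((\<lambda>k. (\<lambda>(l,k). dterm C x y (k,l)) (l, k)) has_sum B l x * y^l) UNIV"
        by (simp add: dterm_def)
    qed
    then show ?thesis by (rule has_sum_imp_sums)
  qed
  have inner: "(deriv^^l) (\<lambda>y. f x y) 0 = fact l * B l x" if x: "\<bar>x\<bar> < r" for x
    by (rule taylor1[OF r]) (use rows[OF x] in \<open>auto simp: sums_iff\<close>)
  have "(deriv^^k) (\<lambda>x. (deriv^^l) (\<lambda>y. f x y) 0) 0 = fact k * (fact l * C k l)"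
  proof (rule taylor1[OF r])
    fix x :: real assume x: "\<bar>x\<bar> < r"
    have sx: "summable (\<lambda>n. C n l * x^n)"
      using summable_norm_cancel[of "\<lambda>n. C n l * x^n"] row_summable[OF c r, of x l] x by simp
    then show "summable (\<lambda>n. fact l * C n l * x^n)"
      using summable_mult[OF sx, of "fact l"] by (simp add: mult_ac)
    show "(deriv^^l) (\<lambda>y. f x y) 0 = (\<Sum>n. fact l * C n l * x^n)"
      using inner[OF x] suminf_mult[OF sx, of "fact l"] by (simp add: B_def mult_ac)
  qed
  then show ?thesis by (simp add: taylor2_def)
qed

lemma a2: "k + l < (2::nat) \<longleftrightarrow> (k,l) \<in> {(0,0),(1,0),(0,1)}" by auto presburger?
lemma T2: "{(k,l). k + l < (2::nat)} = {(0,0),(1,0),(0,1)}" using a2 by auto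
lemma a3: "k + l < (3::nat) \<longleftrightarrow> (k,l) \<in> {(0,0),(1,0),(0,1),(2,0),(1,1),(0,2)}"
  by (cases k; cases l) (auto simp: numeral_eq_Suc)
lemma T3: "{(k,l). k + l < (3::nat)} = {(0,0),(1,0),(0,1),(2,0),(1,1),(0,2)}" using a3 by auto
lemma a4: "k + l < (4::nat) \<longleftrightarrow> (k,l) \<in> {(0,0),(1,0),(0,1),(2,0),(1,1),(0,2),(3,0),(2,1),(1,2),(0,3)}"
  by (cases k; cases l) (auto simp: numeral_eq_Suc)
lemma T4: "{(k,l). k + l < (4::nat)} = {(0,0),(1,0),(0,1),(2,0),(1,1),(0,2),(3,0),(2,1),(1,2),(0,3)}"
  using a4 by auto

lemma finite_T: "finite {(k,l). k + l < (N::nat)}"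
  by (rule finite_subset[of _ "{..N}\<times>{..N}"]) auto

lemma drem:
  fixes C :: "nat \<Rightarrow> nat \<Rightarrow> real"
  assumes c: "dconv C s" and s: "0 < s" and x: "\<bar>x\<bar> \<le> \<tau>" and y: "\<bar>y\<bar> \<le> \<tau>"
    and tau: "\<tau> \<le> s"
  shows "\<bar>dsr C x y - sum (dterm C x y) {(k,l). k + l < N}\<bar> \<le> dM C s * (\<tau>/s)^N"
proof -
  define T where "T = {(k::nat,l::nat). k + l < N}"
  define q where "q = \<tau> / s"
  have t0: "0 \<le> \<tau>" using x by linarith
  have q: "0 \<le> q" "q \<le> 1" using t0 tau s by (auto simp: q_def)
  have xs: "norm x \<le> s" "norm y \<le> s" using x y tau by auto
  have H: "(dterm C x y has_sum dsr C x y) UNIV" by (rule dconv_has_sum[OF c xs])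
  have HT: "(dterm C x y has_sum sum (dterm C x y) T) T"
    by (rule has_sum_finiteI) (auto simp: T_def finite_T)
  have HD: "(dterm C x y has_sum (dsr C x y - sum (dterm C x y) T)) (UNIV - T)"
    by (rule has_sum_Diff[OF H HT]) simp
  have Mh: "((\<lambda>kl. dmaj C s kl * q^N) has_sum dM C s * q^N) UNIV"
    using has_sum_cmult_left[OF has_sum_infsum[OF c[unfolded dconv_def]]] unfolding dM_def .
  have sm: "(\<lambda>kl. dmaj C s kl * q^N) summable_on (UNIV - T)"
    by (rule summable_on_subset[OF has_sum_imp_summable[OF Mh]]) simp
  define S' where "S' = infsum (\<lambda>kl. dmaj C s kl * q^N) (UNIV - T)"
  have HS': "((\<lambda>kl. dmaj C s kl * q^N) has_sum S') (UNIV - T)"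
    using sm unfolding S'_def by simp
  have "S' \<le> dM C s * q^N"
    by (rule has_sum_mono2[OF HS' Mh]) (use s q in \<open>auto intro!: mult_nonneg_nonneg dmaj_nonneg\<close>)
  moreover have "norm (dsr C x y - sum (dterm C x y) T) \<le> S'"
  proof (rule norm_infsum_le[OF HD HS'])
    fix kl assume kl: "kl \<in> UNIV - T"
    obtain k l where kl': "kl = (k,l)" by fastforce
    have N: "N \<le> k + l" using kl kl' by (auto simp: T_def)
    have "norm (dterm C x y kl) = \<bar>C k l\<bar> * \<bar>x\<bar>^k * \<bar>y\<bar>^l"
      by (simp add: kl' dterm_def abs_mult power_abs)
    also have "\<dots> \<le> \<bar>C k l\<bar> * \<tau>^k * \<tau>^l"
      using x y by (intro mult_mono power_mono mult_nonneg_nonneg) auto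
    finally have e1: "norm (dterm C x y kl) \<le> \<bar>C k l\<bar> * (\<tau>^k * \<tau>^l)" by (simp add: mult_ac)
    have e3: "\<tau>^k * \<tau>^l = (s^k * s^l) * q^(k+l)"
      using s by (simp add: q_def power_add power_divide)
    have e4: "(s^k * s^l) * q^(k+l) \<le> (s^k * s^l) * q^N"
      using s by (intro mult_left_mono power_decreasing[OF N q]) auto
    have "\<bar>C k l\<bar> * (\<tau>^k * \<tau>^l) \<le> \<bar>C k l\<bar> * ((s^k * s^l) * q^N)"
      using e3 e4 by (intro mult_left_mono) auto
    with e1 have "norm (dterm C x y kl) \<le> \<bar>C k l\<bar> * ((s^k * s^l) * q^N)" by linarith
    then show "norm (dterm C x y kl) \<le> dmaj C s kl * q^N"
      by (simp add: kl' dmaj_def mult_ac)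
  qed
  ultimately show ?thesis by (simp add: T_def q_def)
qed

lemma lim0:
  fixes a K s :: real
  assumes s: "0 < s" and h: "\<And>h. 0 < h \<Longrightarrow> h \<le> s \<Longrightarrow> - K * h \<le> a"
  shows "0 \<le> a"
proof (rule ccontr)
  assume a: "\<not> 0 \<le> a"
  define h where "h = min s (- a / (2 * (\<bar>K\<bar> + 1)))"
  have "0 < - a / (2 * (\<bar>K\<bar> + 1))" by (rule divide_pos_pos) (use a in auto)
  then have hp: "0 < h" using s by (auto simp: h_def)
  have hs: "h \<le> s" by (simp add: h_def)
  have h2: "h \<le> - a / (2 * (\<bar>K\<bar> + 1))" by (simp add: h_def)
  have "\<bar>K\<bar> * h \<le> \<bar>K\<bar> * (- a / (2 * (\<bar>K\<bar> + 1)))" by (rule mult_left_mono[OF h2]) simp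
  also have "\<dots> \<le> - a / 2"
  proof -
    have "\<bar>K\<bar> / (\<bar>K\<bar> + 1) \<le> 1" by simp
    then have "\<bar>K\<bar> / (\<bar>K\<bar> + 1) * (- a / 2) \<le> 1 * (- a / 2)"
      using a by (intro mult_right_mono) auto
    then show ?thesis by (simp add: field_simps)
  qed
  finally have "\<bar>K\<bar> * h \<le> - a / 2" .
  moreover have "- K * h \<le> a" using h[OF hp hs] .
  moreover have "- \<bar>K\<bar> * h \<le> - K * h" using hp by (simp add: mult_right_mono)
  ultimately show False using a by linarith
qed

lemma lim0':
  fixes A K s :: real
  assumes s: "0 < s" and h: "\<And>h. 0 < h \<Longrightarrow> h \<le> s \<Longrightarrow> - K * h^(Suc d) \<le> h^d * A"
  shows "0 \<le> A"
proof (rule lim0[OF s, of K])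
  fix h :: real assume hp: "0 < h" and hs: "h \<le> s"
  have hh: "h^d * (- K * h) \<le> h^d * A" using h[OF hp hs] by (simp add: mult_ac)
  have pos: "0 < h^d" using hp by simp
  show "- K * h \<le> A" using mult_le_cancel_left_pos[OF pos, of "-K*h" A] hh by blast
qed

lemma dir_pos:
  fixes C :: "nat \<Rightarrow> nat \<Rightarrow> real" and f :: "real \<Rightarrow> real \<Rightarrow> real"
  assumes c: "dconv C r" and r: "0 < r"
    and f: "\<And>x y. \<bar>x\<bar> < r \<Longrightarrow> \<bar>y\<bar> < r \<Longrightarrow> f x y = dsr C x y"
    and nn: "\<And>x y. \<bar>x\<bar> < r \<Longrightarrow> \<bar>y\<bar> < r \<Longrightarrow> 0 \<le> f x y"
    and P: "\<And>h. sum (dterm C (h*t1) (h*t2)) {(k,l). k + l < N} = h^d * A"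
    and N: "N = Suc d"
  shows "0 \<le> A"
proof -
  define s where "s = r / 2"
  have s: "0 < s" "s < r" using r by (auto simp: s_def)
  have cs: "dconv C s" using dconv_mono[OF c] s by simp
  define c0 where "c0 = \<bar>t1\<bar> + \<bar>t2\<bar> + 1"
  have c0: "1 \<le> c0" "\<bar>t1\<bar> \<le> c0" "\<bar>t2\<bar> \<le> c0" by (auto simp: c0_def)
  define M where "M = dM C s"
  show ?thesis
  proof (rule lim0'[of "s / c0" "M * c0^(Suc d) / s^(Suc d)" d])
    show "0 < s / c0" using s c0 by simp
    fix h assume hp: "0 < h" and hs: "h \<le> s / c0"
    have hc: "h * c0 \<le> s" using hs c0 by (simp add: field_simps)
    have x: "\<bar>h * t1\<bar> \<le> h * c0" using hp c0 by (simp add: abs_mult mult_left_mono)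
    have y: "\<bar>h * t2\<bar> \<le> h * c0" using hp c0 by (simp add: abs_mult mult_left_mono)
    have xr: "\<bar>h * t1\<bar> < r" "\<bar>h * t2\<bar> < r" using x y hc s by auto
    have R: "\<bar>dsr C (h*t1) (h*t2) - h^d * A\<bar> \<le> M * (h * c0 / s)^(Suc d)"
      using drem[OF cs s(1) x y hc, of N] unfolding P M_def by (simp add: N)
    have "0 \<le> dsr C (h*t1) (h*t2)" using nn[OF xr] f[OF xr] by simp
    then have "- (M * (h * c0 / s)^(Suc d)) \<le> h^d * A" using R by linarith
    moreover have "M * (h * c0 / s)^(Suc d) = M * c0^(Suc d) / s^(Suc d) * h^(Suc d)"
      by (simp add: power_mult_distrib power_divide field_simps)
    ultimately show "- (M * c0^(Suc d) / s^(Suc d)) * h^(Suc d) \<le> h^d * A" by simp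
  qed
qed

lemma pd_bound:
  fixes a b c :: real
  assumes pd: "\<And>x y. (x, y) \<noteq> (0, 0) \<Longrightarrow> 0 < a * x^2 + b * x * y + c * y^2"
  shows "\<exists>\<mu>>0. \<forall>x y. \<mu> * (x^2 + y^2) \<le> a * x^2 + b * x * y + c * y^2"
proof -
  have a: "0 < a" using pd[of 1 0] by simp
  have c: "0 < c" using pd[of 0 1] by simp
  have "0 < a * (-b)^2 + b * (-b) * (2*a) + c * (2*a)^2" using pd[of "-b" "2*a"] a by simp
  also have "a * (-b)^2 + b * (-b) * (2*a) + c * (2*a)^2 = a * (4*a*c - b^2)"
    by (simp add: power2_eq_square algebra_simps)
  finally have D: "0 < 4*a*c - b^2" using a by (simp add: zero_less_mult_iff)
  define \<mu> where "\<mu> = (4*a*c - b^2) / (4*(a+c))"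
  have mu: "0 < \<mu>" using D a c by (simp add: \<mu>_def)
  have mu_eq: "\<mu> * (4*(a+c)) = 4*a*c - b^2" using a c by (simp add: \<mu>_def)
  define A where "A = a - \<mu>"
  define Cc where "Cc = c - \<mu>"
  have "0 < 4*a^2 + b^2" using a by (simp add: add_pos_nonneg)
  then have "4*a*c - b^2 < a * (4*(a+c))" by (simp add: algebra_simps power2_eq_square)
  then have "\<mu> * (4*(a+c)) < a * (4*(a+c))" using mu_eq by simp
  then have A: "0 < A" using a c unfolding A_def by (simp add: mult_less_cancel_right)
  have key: "4*A*Cc - b^2 = 4*\<mu>^2"
    using mu_eq unfolding A_def Cc_def by (simp add: power2_eq_square algebra_simps)
  have "\<mu> * (x^2 + y^2) \<le> a * x^2 + b * x * y + c * y^2" for x y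
  proof -
    have "4*A*(A*x^2 + b*x*y + Cc*y^2) = (2*A*x + b*y)^2 + (4*A*Cc - b^2)*y^2"
      by (simp add: power2_eq_square algebra_simps)
    also have "\<dots> \<ge> 0" unfolding key by simp
    finally have "0 \<le> 4*A*(A*x^2 + b*x*y + Cc*y^2)" .
    then have "0 \<le> A*x^2 + b*x*y + Cc*y^2" using A by (simp add: zero_le_mult_iff)
    then show ?thesis unfolding A_def Cc_def by (simp add: algebra_simps)
  qed
  then show ?thesis using mu by blast
qed

lemma T1: "{(k,l). k + l < (1::nat)} = {(0,0)}" by auto

lemma key_analysis:
  fixes C :: "nat \<Rightarrow> nat \<Rightarrow> real" and f :: "real \<Rightarrow> real \<Rightarrow> real"
  assumes c: "dconv C r" and r: "0 < r"
    and f: "\<And>x y. \<bar>x\<bar> < r \<Longrightarrow> \<bar>y\<bar> < r \<Longrightarrow> f x y = dsr C x y"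
    and nn: "\<And>x y. \<bar>x\<bar> < r \<Longrightarrow> \<bar>y\<bar> < r \<Longrightarrow> 0 \<le> f x y"
    and f0: "f 0 0 = 0"
  shows "C 0 0 = 0 \<and> C 1 0 = 0 \<and> C 0 1 = 0
     \<and> (\<forall>t1 t2. C 2 0 * t1^2 + C 1 1 * t1 * t2 + C 0 2 * t2^2 \<ge> 0)
     \<and> ((\<forall>t1 t2. (t1, t2) \<noteq> (0, 0) \<longrightarrow> C 2 0 * t1^2 + C 1 1 * t1 * t2 + C 0 2 * t2^2 > 0)
          \<longrightarrow> (\<exists>\<delta>>0. \<forall>x y. \<bar>x\<bar> < \<delta> \<longrightarrow> \<bar>y\<bar> < \<delta> \<longrightarrow> f x y = 0 \<longrightarrow> x = 0 \<and> y = 0))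
     \<and> ((\<forall>t1 t2. C 2 0 * t1^2 + C 1 1 * t1 * t2 + C 0 2 * t2^2 = 0)
          \<longrightarrow> C 3 0 = 0 \<and> C 2 1 = 0 \<and> C 1 2 = 0 \<and> C 0 3 = 0)"
proof -
  define s where "s = r / 2"
  have s: "0 < s" "s < r" using r by (auto simp: s_def)
  have cs: "dconv C s" using dconv_mono[OF c] s by simp
  define M where "M = dM C s"
  have M: "0 \<le> M" unfolding M_def by (rule dM_nonneg) (use s in simp)
  have C00: "C 0 0 = 0"
  proof -
    have "\<bar>dsr C 0 0 - C 0 0\<bar> \<le> M * (0/s)^1"
      using drem[OF cs s(1), of 0 0 0 1] s by (simp add: T1 dterm_def M_def)
    moreover have "dsr C 0 0 = 0" using f[of 0 0] f0 r by simp
    ultimately show ?thesis by simp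
  qed
  have P2: "sum (dterm C (h*aa) (h*bb)) {(k,l). k + l < 2} = h^1 * (C 1 0 * aa + C 0 1 * bb)" for h aa bb
    using C00 by (simp add: T2 dterm_def algebra_simps)
  have C10a: "0 \<le> C 1 0" using dir_pos[OF c r f nn P2[where aa=1 and bb=0]] by simp
  have C10b: "0 \<le> - C 1 0" using dir_pos[OF c r f nn P2[where aa="-1" and bb=0]] by simp
  have C01a: "0 \<le> C 0 1" using dir_pos[OF c r f nn P2[where aa=0 and bb=1]] by simp
  have C01b: "0 \<le> - C 0 1" using dir_pos[OF c r f nn P2[where aa=0 and bb="-1"]] by simp
  have C10: "C 1 0 = 0" and C01: "C 0 1 = 0" using C10a C10b C01a C01b by auto
  define Q where "Q = (\<lambda>t1 t2. C 2 0 * t1^2 + C 1 1 * t1 * t2 + C 0 2 * t2^2)"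
  have P3: "sum (dterm C (h*aa) (h*bb)) {(k,l). k + l < 3} = h^2 * Q aa bb" for h aa bb
    using C00 C10 C01 by (simp add: T3 dterm_def Q_def power_mult_distrib power2_eq_square algebra_simps)
  have Qnn: "0 \<le> Q t1 t2" for t1 t2 using dir_pos[OF c r f nn P3[where aa=t1 and bb=t2]] by simp
  have PD: "\<exists>\<delta>>0. \<forall>x y. \<bar>x\<bar> < \<delta> \<longrightarrow> \<bar>y\<bar> < \<delta> \<longrightarrow> f x y = 0 \<longrightarrow> x = 0 \<and> y = 0"
    if pd: "\<forall>t1 t2. (t1, t2) \<noteq> (0, 0) \<longrightarrow> Q t1 t2 > 0"
  proof -
    obtain \<mu> where mu: "0 < \<mu>" and mub: "\<And>x y. \<mu> * (x^2 + y^2) \<le> Q x y"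
      using pd_bound[of "C 2 0" "C 1 1" "C 0 2"] pd unfolding Q_def by blast
    define \<delta> where "\<delta> = min s (\<mu> * s^3 / (M + 1))"
    have dpos: "0 < \<delta>" using s mu M by (simp add: \<delta>_def)
    have "x = 0 \<and> y = 0" if x: "\<bar>x\<bar> < \<delta>" and y: "\<bar>y\<bar> < \<delta>" and fz: "f x y = 0" for x y
    proof (rule ccontr)
      assume nz: "\<not> (x = 0 \<and> y = 0)"
      define \<tau> where "\<tau> = max \<bar>x\<bar> \<bar>y\<bar>"
      have tp: "0 < \<tau>" using nz by (auto simp: \<tau>_def)
      have td: "\<tau> < \<delta>" using x y by (simp add: \<tau>_def)
      have ts: "\<tau> \<le> s" using td by (simp add: \<delta>_def)
      have tm: "\<tau> < \<mu> * s^3 / (M + 1)" using td by (simp add: \<delta>_def)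
      have xr: "\<bar>x\<bar> < r" "\<bar>y\<bar> < r" using x y s by (auto simp: \<delta>_def)
      have R: "\<bar>dsr C x y - Q x y\<bar> \<le> M * (\<tau>/s)^3"
        using drem[OF cs s(1), of x \<tau> y 3] ts C00 C10 C01
        by (simp add: \<tau>_def T3 dterm_def Q_def M_def)
      have "\<tau>^2 \<le> x^2 + y^2"
        by (cases "\<bar>x\<bar> \<le> \<bar>y\<bar>") (auto simp: \<tau>_def max_def power2_eq_square abs_mult_self_eq)
      then have "\<mu> * \<tau>^2 \<le> Q x y" using mub[of x y] mu
        by (meson mult_left_mono less_imp_le order_trans)
      then have "\<mu> * \<tau>^2 \<le> M * (\<tau>/s)^3" using R fz f[OF xr] by linarith
      also have "M * (\<tau>/s)^3 = (M * \<tau> / s^3) * \<tau>^2"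
        by (simp add: power_divide power3_eq_cube power2_eq_square)
      finally have le1: "\<mu> * \<tau>^2 \<le> (M * \<tau> / s^3) * \<tau>^2" .
      have pos: "0 < \<tau>^2" using tp by simp
      have "\<mu> \<le> M * \<tau> / s^3" using mult_le_cancel_right_pos[OF pos, of \<mu> "M * \<tau> / s^3"] le1 by blast
      also have "M * \<tau> / s^3 \<le> M * (\<mu> * s^3 / (M + 1)) / s^3"
        using tm M s by (intro divide_right_mono mult_left_mono) auto
      also have "\<dots> = \<mu> * (M / (M + 1))"
      proof -
        have "s^3 \<noteq> 0" "M + 1 \<noteq> 0" using s M by auto
        moreover have "0 < s^3 + M * s^3" using s M by (simp add: add_pos_nonneg)
        ultimately show ?thesis by (simp add: field_simps)
      qed
      also have "\<dots> < \<mu>"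
      proof -
        have "M / (M + 1) < 1" using M by simp
        then have "\<mu> * (M / (M + 1)) < \<mu> * 1" using mu by (rule mult_strict_left_mono)
        then show ?thesis by simp
      qed
      finally show False by simp
    qed
    then show ?thesis using dpos by blast
  qed
  have CUB: "C 3 0 = 0 \<and> C 2 1 = 0 \<and> C 1 2 = 0 \<and> C 0 3 = 0" if q0: "\<forall>t1 t2. Q t1 t2 = 0"
  proof -
    have C20: "C 2 0 = 0" using q0[rule_format, of 1 0] by (simp add: Q_def)
    have C02: "C 0 2 = 0" using q0[rule_format, of 0 1] by (simp add: Q_def)
    have C11: "C 1 1 = 0" using q0[rule_format, of 1 1] C20 C02 by (simp add: Q_def)
    define Cub where "Cub = (\<lambda>t1 t2. C 3 0 * t1^3 + C 2 1 * t1^2 * t2 + C 1 2 * t1 * t2^2 + C 0 3 * t2^3)"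
    have P4: "sum (dterm C (h*aa) (h*bb)) {(k,l). k + l < 4} = h^3 * Cub aa bb" for h aa bb
      using C00 C10 C01 C20 C02 C11
      by (simp add: T4 dterm_def Cub_def power_mult_distrib power2_eq_square power3_eq_cube algebra_simps)
    have Cnn: "0 \<le> Cub t1 t2" for t1 t2 using dir_pos[OF c r f nn P4[where aa=t1 and bb=t2]] by simp
    have Cneg: "Cub (-t1) (-t2) = - Cub t1 t2" for t1 t2 by (simp add: Cub_def power3_eq_cube power2_eq_square)
    have C0: "Cub t1 t2 = 0" for t1 t2 using Cnn[of t1 t2] Cnn[of "-t1" "-t2"] Cneg[of t1 t2] by linarith
    have e1: "C 3 0 = 0" using C0[of 1 0] by (simp add: Cub_def)
    have e2: "C 0 3 = 0" using C0[of 0 1] by (simp add: Cub_def)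
    have e3: "C 2 1 + C 1 2 = 0" using C0[of 1 1] e1 e2 by (simp add: Cub_def)
    have e4: "C 1 2 - C 2 1 = 0" using C0[of 1 "-1"] e1 e2 by (simp add: Cub_def)
    show ?thesis using e1 e2 e3 e4 by linarith
  qed
  show ?thesis using C00 C10 C01 Qnn PD CUB unfolding Q_def by blast
qed

definition Eco :: "real \<Rightarrow> nat \<Rightarrow> complex" where
  "Eco a k = (\<i> * complex_of_real a)^k /\<^sub>R fact k"

lemma Eco_summ: "summable (\<lambda>k. norm (Eco a k) * r^k)"
proof -
  have "norm (Eco a k) * r^k = inverse (fact k) * (\<bar>a\<bar> * r)^k" for k
    by (simp add: Eco_def norm_mult norm_power power_mult_distrib divide_inverse mult_ac)
  then show ?thesis using summable_exp[of "\<bar>a\<bar> * r"] by simp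
qed

lemma Eco_sum: "(\<Sum>k. Eco a k * x^k) = exp (\<i> * complex_of_real a * x)"
proof -
  have "(\<lambda>k. Eco a k * x^k) = (\<lambda>k. (\<i> * complex_of_real a * x)^k /\<^sub>R fact k)"
    by (auto simp: fun_eq_iff Eco_def scaleR_conv_of_real power_mult_distrib mult_ac)
  then show ?thesis by (simp add: exp_def)
qed

definition dsep :: "real \<Rightarrow> real \<Rightarrow> nat \<Rightarrow> nat \<Rightarrow> complex" where
  "dsep a b = dmul (dX (Eco a)) (dY (Eco b))"

lemma dsep_props:
  assumes r: "0 \<le> r"
  shows "dconv (dsep a b) r"
    "norm x \<le> r \<Longrightarrow> norm y \<le> r \<Longrightarrow> dsr (dsep a b) x y = exp (\<i> * complex_of_real a * x) * exp (\<i> * complex_of_real b * y)"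
proof -
  have X: "dconv (dX (Eco a)) r" by (rule dX_props(1)[OF Eco_summ r])
  have Y: "dconv (dY (Eco b)) r" by (rule dY_props(1)[OF Eco_summ r])
  show "dconv (dsep a b) r" unfolding dsep_def by (rule dmul_conv(1)[OF X Y r])
  assume x: "norm x \<le> r" and y: "norm y \<le> r"
  show "dsr (dsep a b) x y = exp (\<i> * complex_of_real a * x) * exp (\<i> * complex_of_real b * y)"
    unfolding dsep_def dmul_sum[OF X Y x y] dX_props(2)[OF Eco_summ r x] dY_props(2)[OF Eco_summ r y]
    by (simp add: Eco_sum)
qed

definition dpoly :: "(nat \<Rightarrow> nat \<Rightarrow> complex) \<Rightarrow> real \<Rightarrow> nat \<Rightarrow> nat \<Rightarrow> nat \<Rightarrow> nat \<Rightarrow> complex" where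
  "dpoly \<alpha> \<sigma> m n = (\<lambda>k l. \<Sum>ij\<in>{..m}\<times>{..n}. dscal (\<alpha> (fst ij) (snd ij)) (dsep (\<sigma> * real (fst ij)) (\<sigma> * real (snd ij))) k l)"

lemma dpoly_props:
  assumes r: "0 \<le> r"
  shows "dconv (dpoly \<alpha> \<sigma> m n) r"
    "norm x \<le> r \<Longrightarrow> norm y \<le> r \<Longrightarrow> dsr (dpoly \<alpha> \<sigma> m n) x y =
       (\<Sum>i\<le>m. \<Sum>j\<le>n. \<alpha> i j * exp (\<i> * complex_of_real (\<sigma> * real i) * x) * exp (\<i> * complex_of_real (\<sigma> * real j) * y))"
proof -
  let ?B = "\<lambda>ij. dscal (\<alpha> (fst ij) (snd ij)) (dsep (\<sigma> * real (fst ij)) (\<sigma> * real (snd ij)))"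
  have cB: "dconv (?B ij) r" for ij by (rule dscal_conv[OF dsep_props(1)[OF r]])
  have F: "dconv (\<lambda>k l. \<Sum>s\<in>{..m}\<times>{..n}. ?B s k l) r \<and>
         (\<forall>x y. norm x \<le> r \<longrightarrow> norm y \<le> r \<longrightarrow> dsr (\<lambda>k l. \<Sum>s\<in>{..m}\<times>{..n}. ?B s k l) x y = (\<Sum>s\<in>{..m}\<times>{..n}. dsr (?B s) x y))"
    by (rule dfin_conv_sum[OF _ cB r]) simp
  show "dconv (dpoly \<alpha> \<sigma> m n) r" using F unfolding dpoly_def by simp
  assume x: "norm x \<le> r" and y: "norm y \<le> r"
  have "dsr (dpoly \<alpha> \<sigma> m n) x y = (\<Sum>s\<in>{..m}\<times>{..n}. dsr (?B s) x y)"
    using F x y unfolding dpoly_def by simp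
  also have "\<dots> = (\<Sum>s\<in>{..m}\<times>{..n}. \<alpha> (fst s) (snd s) * (exp (\<i> * complex_of_real (\<sigma> * real (fst s))* x) * exp (\<i> * complex_of_real (\<sigma> * real (snd s)) * y)))"
    by (intro sum.cong refl) (simp add: dscal_sum[OF dsep_props(1)[OF r] x y] dsep_props(2)[OF r x y])
  also have "\<dots> = (\<Sum>i\<le>m. \<Sum>j\<le>n. \<alpha> i j * exp (\<i> * complex_of_real (\<sigma> * real i) * x) * exp (\<i> * complex_of_real (\<sigma> * real j) * y))"
    by (subst sum.cartesian_product) (simp add: case_prod_beta' mult.assoc)
  finally show "dsr (dpoly \<alpha> \<sigma> m n) x y = (\<Sum>i\<le>m. \<Sum>j\<le>n. \<alpha> i j * exp (\<i> * complex_of_real (\<sigma> * real i) * x) * exp (\<i> * complex_of_real (\<sigma> * real j) * y))" .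
qed

lemma exp_cis_pow: "exp (\<i> * complex_of_real (1 * real i) * complex_of_real t) = cis t ^ i"
proof -
  have "cis t ^ i = cis (real i * t)" by (rule Complex.DeMoivre)
  also have "\<dots> = exp (\<i> * complex_of_real (real i * t))" by (rule cis_conv_exp)
  finally show ?thesis by (simp add: mult_ac)
qed

lemma exp_cis_pow_neg: "exp (\<i> * complex_of_real (-1 * real i) * complex_of_real t) = cnj (cis t ^ i)"
proof -
  have "cnj (cis t ^ i) = cis (-t) ^ i" by (simp add: cis_cnj)
  also have "\<dots> = cis (real i * (-t))" by (rule Complex.DeMoivre)
  also have "\<dots> = exp (\<i> * complex_of_real (real i * (-t)))" by (rule cis_conv_exp)
  finally show ?thesis by (simp add: mult_ac)
qed

lemma dsr_zero: "dsr b 0 0 = b 0 0"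
proof -
  have "(dterm b 0 0 has_sum b 0 0) UNIV"
    by (rule has_sum_finite_neutralI[where B="{(0,0)}"]) (auto simp: dterm_def)
  then show ?thesis unfolding dsr_def by (rule infsumI)
qed

lemma sum_atMost_1: "(\<Sum>k\<le>(1::nat). g k) = g 0 + g 1"
  by (simp add: atMost_Suc add.commute)

lemma pev_split: "pev a m n z1 z2 z3 = p1ev a m n z1 z2 + z3 * p2ev a m n z1 z2"
  unfolding pev_def p1ev_def p2ev_def sum_atMost_1
  by (simp add: sum.distrib sum_distrib_left algebra_simps)

lemma unit_pow_cnj:
  fixes z :: complex
  assumes "cmod z = 1" "i \<le> m"
  shows "z^m * cnj z ^ i = z^(m-i)"
proof -
  have zc: "z * cnj z = 1" using complex_norm_square[of z] assms(1) by simp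
  have "z^m = z^(m-i) * z^i" using assms(2) by (simp add: power_add[symmetric])
  then have "z^m * cnj z ^ i = z^(m-i) * (z * cnj z)^i" by (simp add: power_mult_distrib mult_ac)
  then show ?thesis using zc by simp
qed

lemma pt_unit:
  fixes z1 z2 :: complex
  assumes z1: "cmod z1 = 1" and z2: "cmod z2 = 1"
  shows "pt1ev a m n z1 z2 = z1^m * z2^n * cnj (p1ev a m n z1 z2)"
    "pt2ev a m n z1 z2 = z1^m * z2^n * cnj (p2ev a m n z1 z2)"
proof -
  have e: "cnj c * z1^(m-i) * z2^(n-j) = z1^m * z2^n * (cnj c * cnj z1 ^ i * cnj z2 ^ j)"
    if "i \<le> m" "j \<le> n" for c i j
    using unit_pow_cnj[OF z1 that(1)] unit_pow_cnj[OF z2 that(2)]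
    by (simp add: mult_ac)
  show "pt1ev a m n z1 z2 = z1^m * z2^n * cnj (p1ev a m n z1 z2)"
    unfolding pt1ev_def p1ev_def by (simp add: sum_distrib_left e)
  show "pt2ev a m n z1 z2 = z1^m * z2^n * cnj (p2ev a m n z1 z2)"
    unfolding pt2ev_def p2ev_def by (simp add: sum_distrib_left e)
qed

lemma pt_norm:
  assumes "cmod z1 = 1" "cmod z2 = 1"
  shows "cmod (pt1ev a m n z1 z2) = cmod (p1ev a m n z1 z2)"
    "cmod (pt2ev a m n z1 z2) = cmod (p2ev a m n z1 z2)"
  using assms by (simp_all add: pt_unit norm_mult norm_power)

lemma p2_le_p1:
  assumes zf: "\<And>z1 z2 z3. cmod z1 < 1 \<Longrightarrow> cmod z2 < 1 \<Longrightarrow> cmod z3 < 1 \<Longrightarrow> pev a m n z1 z2 z3 \<noteq> 0"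
    and z1: "cmod z1 = 1" and z2: "cmod z2 = 1"
  shows "cmod (p2ev a m n z1 z2) \<le> cmod (p1ev a m n z1 z2)"
proof (rule ccontr)
  assume "\<not> ?thesis"
  then have gt: "cmod (p1ev a m n z1 z2) < cmod (p2ev a m n z1 z2)" by simp
  define g where "g = (\<lambda>\<rho>::real. cmod (p2ev a m n (of_real \<rho> * z1) (of_real \<rho> * z2)) - cmod (p1ev a m n (of_real \<rho> * z1) (of_real \<rho> * z2)))"
  have "isCont g 1" unfolding g_def p1ev_def p2ev_def by (intro continuous_intros)
  then have "(g \<longlongrightarrow> g 1) (at 1)" by (simp add: isCont_def)
  then have "(g \<longlongrightarrow> g 1) (at_left 1)" by (rule tendsto_within_subset) simp
  moreover have "0 < g 1" using gt by (simp add: g_def)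
  ultimately have ev1: "eventually (\<lambda>\<rho>. 0 < g \<rho>) (at_left 1)" by (rule order_tendstoD(1))
  have ev2: "eventually (\<lambda>\<rho>. \<rho> \<in> {0<..<1}) (at_left (1::real))" by (rule eventually_at_left_real) simp
  obtain \<rho> where g\<rho>: "0 < g \<rho>" and \<rho>: "\<rho> \<in> {0<..<1}"
    using eventually_happens[OF eventually_conj[OF ev1 ev2]] by auto
  define w1 where "w1 = of_real \<rho> * z1"
  define w2 where "w2 = of_real \<rho> * z2"
  have w1: "cmod w1 < 1" and w2: "cmod w2 < 1" using \<rho> z1 z2 by (auto simp: w1_def w2_def norm_mult)
  have lt: "cmod (p1ev a m n w1 w2) < cmod (p2ev a m n w1 w2)" using g\<rho> by (simp add: g_def w1_def w2_def)
  then have p2nz: "p2ev a m n w1 w2 \<noteq> 0" by auto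
  define z3 where "z3 = - p1ev a m n w1 w2 / p2ev a m n w1 w2"
  have z3: "cmod z3 < 1" using lt p2nz by (simp add: z3_def norm_divide divide_less_eq)
  have "pev a m n w1 w2 z3 = 0" using p2nz by (simp add: pev_split z3_def)
  then show False using zf[OF w1 w2 z3] by simp
qed

lemma isolated_aux:
  fixes a :: "nat \<Rightarrow> nat \<Rightarrow> nat \<Rightarrow> complex"
  assumes d: "0 < \<delta>"
    and rz: "\<And>x y. \<bar>x\<bar> < \<delta> \<Longrightarrow> \<bar>y\<bar> < \<delta> \<Longrightarrow> rho a m n x y = 0 \<Longrightarrow> x = 0 \<and> y = 0"
    and p1nz: "\<And>x y. \<bar>x\<bar> < \<delta> \<Longrightarrow> \<bar>y\<bar> < \<delta> \<Longrightarrow> p1ev a m n (cis x) (cis y) \<noteq> 0"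
    and rf: "\<And>x y. \<bar>x\<bar> < \<delta> \<Longrightarrow> \<bar>y\<bar> < \<delta> \<Longrightarrow>
              rho a m n x y = 1 - (cmod (p2ev a m n (cis x) (cis y)))^2 / (cmod (p1ev a m n (cis x) (cis y)))^2"
    and p11: "p1ev a m n 1 1 \<noteq> 0" and p21: "p2ev a m n 1 1 = - p1ev a m n 1 1"
  shows "\<exists>\<epsilon>>0. \<forall>z1 z2 z3. cmod z1 = 1 \<and> cmod z2 = 1 \<and> cmod z3 = 1 \<and> pev a m n z1 z2 z3 = 0
                 \<and> cmod (z1 - 1) < \<epsilon> \<and> cmod (z2 - 1) < \<epsilon> \<and> cmod (z3 - 1) < \<epsilon>
                 \<longrightarrow> z1 = 1 \<and> z2 = 1 \<and> z3 = 1"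
proof -
  have "continuous (at 1) Arg" by (rule continuous_at_Arg) (simp add: nonpos_Reals_def)
  then obtain \<epsilon> where e: "0 < \<epsilon>" and eb: "\<And>z. dist z 1 < \<epsilon> \<Longrightarrow> dist (Arg z) (Arg 1) < \<delta>"
    using d unfolding continuous_at_eps_delta by blast
  have "z1 = 1 \<and> z2 = 1 \<and> z3 = 1"
    if z1: "cmod z1 = 1" and z2: "cmod z2 = 1" and z3: "cmod z3 = 1" and pz: "pev a m n z1 z2 z3 = 0"
      and e1: "cmod (z1 - 1) < \<epsilon>" and e2: "cmod (z2 - 1) < \<epsilon>" for z1 z2 z3
  proof -
    define t1 where "t1 = Arg z1"
    define t2 where "t2 = Arg z2"
    have t1: "\<bar>t1\<bar> < \<delta>" using eb[of z1] e1 by (simp add: t1_def dist_norm)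
    have t2: "\<bar>t2\<bar> < \<delta>" using eb[of z2] e2 by (simp add: t2_def dist_norm)
    have nz1: "z1 \<noteq> 0" using z1 by auto
    have nz2: "z2 \<noteq> 0" using z2 by auto
    have c1: "cis t1 = z1" using z1 cis_Arg[OF nz1] by (simp add: t1_def sgn_eq)
    have c2: "cis t2 = z2" using z2 cis_Arg[OF nz2] by (simp add: t2_def sgn_eq)
    have pnz: "p1ev a m n z1 z2 \<noteq> 0" using p1nz[OF t1 t2] c1 c2 by simp
    have "p1ev a m n z1 z2 = - z3 * p2ev a m n z1 z2" using pz by (simp add: pev_split add_eq_0_iff)
    then have eqn: "cmod (p1ev a m n z1 z2) = cmod (p2ev a m n z1 z2)" using z3 by (simp add: norm_mult)
    have p2nz: "p2ev a m n z1 z2 \<noteq> 0" using eqn pnz by auto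
    have "rho a m n t1 t2 = 0" using rf[OF t1 t2] c1 c2 eqn pnz p2nz by simp
    then have "t1 = 0 \<and> t2 = 0" using rz[OF t1 t2] by simp
    then have zz: "z1 = 1" "z2 = 1" using c1 c2 by auto
    have "p1ev a m n 1 1 + z3 * p2ev a m n 1 1 = 0" using pz zz by (simp add: pev_split)
    then have "p1ev a m n 1 1 * (1 - z3) = 0" using p21 by (simp add: algebra_simps)
    then have "z3 = 1" using p11 by simp
    then show ?thesis using zz by simp
  qed
  then show ?thesis using e by blast
qed

theorem lemma3p10:
  fixes a :: "nat \<Rightarrow> nat \<Rightarrow> nat \<Rightarrow> complex" and m n :: nat
  defines "p \<equiv> pev a m n" and "pt \<equiv> ptev a m n"
      and "c \<equiv> taylor2 (rho a m n)"
  assumes supp: "\<And>i j k. a i j k \<noteq> 0 \<Longrightarrow> i \<le> m \<and> j \<le> n \<and> k \<le> 1"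
    and deg: "(\<exists>j k. a 0 j k \<noteq> 0) \<and> (\<exists>i k. a i 0 k \<noteq> 0) \<and> (\<exists>i j. a i j 0 \<noteq> 0)"
    and zero_free: "\<And>z1 z2 z3. cmod z1 < 1 \<Longrightarrow> cmod z2 < 1 \<Longrightarrow> cmod z3 < 1 \<Longrightarrow> p z1 z2 z3 \<noteq> 0"
    and coprime: "no_common_factor3 p pt"
    and irred: "irreducible3 p"
    and sing: "p 1 1 1 = 0"
    and not_line: "\<not> (\<forall>\<zeta>. cmod \<zeta> = 1 \<longrightarrow> p 1 1 \<zeta> = 0)"
  shows "(\<exists>r>0. \<forall>t1 t2. \<bar>t1\<bar> < r \<and> \<bar>t2\<bar> < r \<longrightarrow>
            ((\<lambda>(k, l). c k l * t1 ^ k * t2 ^ l) has_sum rho a m n t1 t2) UNIV)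
     \<and> (c 0 0 = 0 \<and> c 1 0 = 0 \<and> c 0 1 = 0)
     \<and> (\<forall>t1 t2. c 2 0 * t1^2 + c 1 1 * t1 * t2 + c 0 2 * t2^2 \<ge> 0)
     \<and> ((\<forall>t1 t2. (t1, t2) \<noteq> (0, 0) \<longrightarrow> c 2 0 * t1^2 + c 1 1 * t1 * t2 + c 0 2 * t2^2 > 0)
          \<longrightarrow> (\<exists>\<epsilon>>0. \<forall>z1 z2 z3. cmod z1 = 1 \<and> cmod z2 = 1 \<and> cmod z3 = 1 \<and> p z1 z2 z3 = 0
                 \<and> cmod (z1 - 1) < \<epsilon> \<and> cmod (z2 - 1) < \<epsilon> \<and> cmod (z3 - 1) < \<epsilon>
                 \<longrightarrow> z1 = 1 \<and> z2 = 1 \<and> z3 = 1))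
     \<and> ((\<forall>t1 t2. c 2 0 * t1^2 + c 1 1 * t1 * t2 + c 0 2 * t2^2 = 0)
          \<longrightarrow> c 3 0 = 0 \<and> c 2 1 = 0 \<and> c 1 2 = 0 \<and> c 0 3 = 0)"
proof -
  have zf: "\<And>z1 z2 z3. cmod z1 < 1 \<Longrightarrow> cmod z2 < 1 \<Longrightarrow> cmod z3 < 1 \<Longrightarrow> pev a m n z1 z2 z3 \<noteq> 0"
    using zero_free unfolding p_def by blast
  have p11: "p1ev a m n 1 1 \<noteq> 0"
  proof
    assume z: "p1ev a m n 1 1 = 0"
    have "p2ev a m n 1 1 = 0" using sing z by (simp add: p_def pev_split)
    then have "\<forall>\<zeta>. cmod \<zeta> = 1 \<longrightarrow> p 1 1 \<zeta> = 0" using z by (simp add: p_def pev_split)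
    then show False using not_line by blast
  qed
  have p21: "p2ev a m n 1 1 = - p1ev a m n 1 1"
    using sing by (simp add: p_def pev_split add_eq_0_iff)
  define S1 where "S1 = dpoly (\<lambda>i j. a i j 0) 1 m n"
  define S1c where "S1c = dpoly (\<lambda>i j. cnj (a i j 0)) (-1) m n"
  define S2 where "S2 = dpoly (\<lambda>i j. a i j 1) 1 m n"
  define S2c where "S2c = dpoly (\<lambda>i j. cnj (a i j 1)) (-1) m n"
  have cS: "dconv S1 1" "dconv S1c 1" "dconv S2 1" "dconv S2c 1"
    unfolding S1_def S1c_def S2_def S2c_def by (simp_all add: dpoly_props(1))
  have vS: "dsr S1 (of_real t1) (of_real t2) = p1ev a m n (cis t1) (cis t2)"
    "dsr S1c (of_real t1) (of_real t2) = cnj (p1ev a m n (cis t1) (cis t2))"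
    "dsr S2 (of_real t1) (of_real t2) = p2ev a m n (cis t1) (cis t2)"
    "dsr S2c (of_real t1) (of_real t2) = cnj (p2ev a m n (cis t1) (cis t2))"
    if "\<bar>t1\<bar> \<le> 1" "\<bar>t2\<bar> \<le> 1" for t1 t2
  proof -
    have nx: "norm (complex_of_real t1) \<le> 1" "norm (complex_of_real t2) \<le> 1" using that by simp_all
    show "dsr S1 (of_real t1) (of_real t2) = p1ev a m n (cis t1) (cis t2)"
      unfolding S1_def dpoly_props(2)[OF zero_le_one nx] exp_cis_pow by (simp add: p1ev_def)
    show "dsr S2 (of_real t1) (of_real t2) = p2ev a m n (cis t1) (cis t2)"
      unfolding S2_def dpoly_props(2)[OF zero_le_one nx] exp_cis_pow by (simp add: p2ev_def)
    show "dsr S1c (of_real t1) (of_real t2) = cnj (p1ev a m n (cis t1) (cis t2))"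
      unfolding S1c_def dpoly_props(2)[OF zero_le_one nx] exp_cis_pow_neg by (simp add: p1ev_def)
    show "dsr S2c (of_real t1) (of_real t2) = cnj (p2ev a m n (cis t1) (cis t2))"
      unfolding S2c_def dpoly_props(2)[OF zero_le_one nx] exp_cis_pow_neg by (simp add: p2ev_def)
  qed
  define D where "D = dmul S1 S1c"
  define E2 where "E2 = dmul S2 S2c"
  have cD: "dconv D 1" unfolding D_def by (rule dmul_conv(1)[OF cS(1,2) zero_le_one])
  have cE2: "dconv E2 1" unfolding E2_def by (rule dmul_conv(1)[OF cS(3,4) zero_le_one])
  have vD: "dsr D (of_real t1) (of_real t2) = of_real ((cmod (p1ev a m n (cis t1) (cis t2)))^2)"
    "dsr E2 (of_real t1) (of_real t2) = of_real ((cmod (p2ev a m n (cis t1) (cis t2)))^2)"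
    if "\<bar>t1\<bar> \<le> 1" "\<bar>t2\<bar> \<le> 1" for t1 t2
  proof -
    have nx: "norm (complex_of_real t1) \<le> 1" "norm (complex_of_real t2) \<le> 1" using that by simp_all
    show "dsr D (of_real t1) (of_real t2) = of_real ((cmod (p1ev a m n (cis t1) (cis t2)))^2)"
      unfolding D_def dmul_sum[OF cS(1,2) nx] vS[OF that] complex_norm_square ..
    show "dsr E2 (of_real t1) (of_real t2) = of_real ((cmod (p2ev a m n (cis t1) (cis t2)))^2)"
      unfolding E2_def dmul_sum[OF cS(3,4) nx] vS[OF that] complex_norm_square ..
  qed
  have D00: "D 0 0 \<noteq> 0"
  proof -
    have "D 0 0 = dsr D (of_real 0) (of_real 0)" by (simp add: dsr_zero)
    also have "\<dots> = of_real ((cmod (p1ev a m n 1 1))^2)" using vD(1)[of 0 0] by simp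
    finally show ?thesis using p11 by simp
  qed
  obtain r e where r: "0 < r" "r \<le> 1" and ce: "dconv e r"
    and ve: "\<And>x y. norm x \<le> r \<Longrightarrow> norm y \<le> r \<Longrightarrow> dsr D x y \<noteq> 0 \<and> dsr e x y = 1 / dsr D x y"
    using drecip[OF cD zero_less_one D00] by blast
  have r0: "0 \<le> r" using r by simp
  have cDr: "dconv D r" "dconv E2 r" using dconv_mono[OF cD r0 r(2)] dconv_mono[OF cE2 r0 r(2)] by auto
  define Nn where "Nn = dadd D (dscal (-1) E2)"
  define F where "F = dmul Nn e"
  have cN: "dconv Nn r" unfolding Nn_def by (rule dadd_conv[OF cDr(1) dscal_conv[OF cDr(2)] r0])
  have cF: "dconv F r" unfolding F_def by (rule dmul_conv(1)[OF cN ce r0])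
  have vF: "dsr F x y = (dsr D x y - dsr E2 x y) * (1 / dsr D x y)" if x: "norm x \<le> r" and y: "norm y \<le> r" for x y
  proof -
    have "dsr F x y = dsr Nn x y * dsr e x y" unfolding F_def by (rule dmul_sum[OF cN ce x y])
    moreover have "dsr Nn x y = dsr D x y + (-1) * dsr E2 x y"
      unfolding Nn_def dadd_sum[OF cDr(1) dscal_conv[OF cDr(2)] x y] dscal_sum[OF cDr(2) x y] ..
    ultimately show ?thesis using ve[OF x y] by simp
  qed
  define C where "C = (\<lambda>k l. Re (F k l))"
  have cC: "dconv C r"
    unfolding dconv_def
  proof (rule summable_on_comparison_test[OF cF[unfolded dconv_def]])
    show "dmaj C r kl \<le> dmaj F r kl" for kl
      using r0 by (cases kl) (simp add: dmaj_def C_def abs_Re_le_cmod mult_right_mono)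
    show "0 \<le> dmaj C r kl" for kl using r0 by (rule dmaj_nonneg)
  qed
  have vC: "dsr C x y = Re (dsr F (of_real x) (of_real y))" if x: "\<bar>x\<bar> \<le> r" and y: "\<bar>y\<bar> \<le> r" for x y
  proof -
    have nx: "norm (complex_of_real x) \<le> r" "norm (complex_of_real y) \<le> r" using x y by simp_all
    have H: "((\<lambda>kl. Re (dterm F (of_real x) (of_real y) kl)) has_sum Re (dsr F (of_real x) (of_real y))) UNIV"
      by (rule has_sum_Re[OF dconv_has_sum[OF cF nx]])
    have "Re (dterm F (of_real x) (of_real y) kl) = dterm C x y kl" for kl
    proof (cases kl)
      case (Pair k l)
      have "F k l * complex_of_real x ^ k * complex_of_real y ^ l = complex_of_real (x^k * y^l) * F k l"
        by (simp add: mult_ac)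
      then show ?thesis by (simp add: Pair dterm_def C_def mult_ac del: of_real_mult of_real_power)
    qed
    then have "(dterm C x y has_sum Re (dsr F (of_real x) (of_real y))) UNIV" using H by simp
    then show ?thesis unfolding dsr_def by (rule infsumI)
  qed
  have rho_form: "rho a m n x y = 1 - (cmod (p2ev a m n (cis x) (cis y)))^2 / (cmod (p1ev a m n (cis x) (cis y)))^2" for x y
    by (simp add: rho_def psi0_def norm_divide pt_norm power_divide)
  have rho_eq: "rho a m n x y = dsr C x y \<and> p1ev a m n (cis x) (cis y) \<noteq> 0"
    if x: "\<bar>x\<bar> \<le> r" and y: "\<bar>y\<bar> \<le> r" for x y
  proof -
    have nx: "norm (complex_of_real x) \<le> r" "norm (complex_of_real y) \<le> r" using x y by simp_all
    have x1: "\<bar>x\<bar> \<le> 1" "\<bar>y\<bar> \<le> 1" using x y r by auto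
    define A where "A = (cmod (p1ev a m n (cis x) (cis y)))^2"
    define B where "B = (cmod (p2ev a m n (cis x) (cis y)))^2"
    have Dn: "dsr D (of_real x) (of_real y) \<noteq> 0" using ve[OF nx] by simp
    then have A0: "A \<noteq> 0" using vD(1)[OF x1] by (simp add: A_def)
    then have P0: "p1ev a m n (cis x) (cis y) \<noteq> 0" by (auto simp: A_def)
    have "dsr C x y = Re ((of_real A - of_real B) * (1 / of_real A))"
      using vC[OF x y] vF[OF nx] vD[OF x1] by (simp add: A_def B_def)
    also have "\<dots> = 1 - B / A" using A0 by (simp add: field_simps del: of_real_diff)
    finally show ?thesis using rho_form[of x y] P0 by (simp add: A_def B_def)
  qed
  have fC: "rho a m n x y = dsr C x y" if "\<bar>x\<bar> < r" "\<bar>y\<bar> < r" for x y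
    using rho_eq[of x y] that by simp
  have c_eq: "c = C"
    by (intro ext) (simp add: c_def taylor2_id[OF cC r(1) fC])
  have nn: "0 \<le> rho a m n x y" if "\<bar>x\<bar> < r" "\<bar>y\<bar> < r" for x y
  proof -
    have P0: "p1ev a m n (cis x) (cis y) \<noteq> 0" using rho_eq[of x y] that by simp
    have le: "cmod (p2ev a m n (cis x) (cis y)) \<le> cmod (p1ev a m n (cis x) (cis y))"
      by (rule p2_le_p1[OF zf]) simp_all
    then have "(cmod (p2ev a m n (cis x) (cis y)))^2 \<le> (cmod (p1ev a m n (cis x) (cis y)))^2"
      by (simp add: power_mono)
    then show ?thesis using P0 by (simp add: rho_form divide_le_eq_1)
  qed
  have rho00: "rho a m n 0 0 = 0" using p11 by (simp add: rho_form p21)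
  note KA = key_analysis[OF cC r(1) fC nn rho00]
  have part1: "\<exists>r>0. \<forall>t1 t2. \<bar>t1\<bar> < r \<and> \<bar>t2\<bar> < r \<longrightarrow>
            ((\<lambda>(k, l). C k l * t1 ^ k * t2 ^ l) has_sum rho a m n t1 t2) UNIV"
  proof (intro exI[of _ r] conjI allI impI)
    show "0 < r" by (rule r(1))
    fix t1 t2 :: real assume t: "\<bar>t1\<bar> < r \<and> \<bar>t2\<bar> < r"
    have "(dterm C t1 t2 has_sum dsr C t1 t2) UNIV" by (rule dconv_has_sum[OF cC]) (use t in auto)
    moreover have "dterm C t1 t2 = (\<lambda>(k,l). C k l * t1^k * t2^l)" by (simp add: dterm_def)
    ultimately show "((\<lambda>(k, l). C k l * t1 ^ k * t2 ^ l) has_sum rho a m n t1 t2) UNIV"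
      using fC t by simp
  qed
  have iso: "(\<forall>t1 t2. (t1, t2) \<noteq> (0, 0) \<longrightarrow> C 2 0 * t1^2 + C 1 1 * t1 * t2 + C 0 2 * t2^2 > 0)
          \<longrightarrow> (\<exists>\<epsilon>>0. \<forall>z1 z2 z3. cmod z1 = 1 \<and> cmod z2 = 1 \<and> cmod z3 = 1 \<and> p z1 z2 z3 = 0
                 \<and> cmod (z1 - 1) < \<epsilon> \<and> cmod (z2 - 1) < \<epsilon> \<and> cmod (z3 - 1) < \<epsilon>
                 \<longrightarrow> z1 = 1 \<and> z2 = 1 \<and> z3 = 1)"
  proof
    assume pd: "\<forall>t1 t2. (t1, t2) \<noteq> (0, 0) \<longrightarrow> C 2 0 * t1^2 + C 1 1 * t1 * t2 + C 0 2 * t2^2 > 0"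
    obtain \<delta> where d: "0 < \<delta>"
      and dz: "\<forall>x y. \<bar>x\<bar> < \<delta> \<longrightarrow> \<bar>y\<bar> < \<delta> \<longrightarrow> rho a m n x y = 0 \<longrightarrow> x = 0 \<and> y = 0"
      using KA pd by blast
    define \<delta>' where "\<delta>' = min \<delta> r"
    have d': "0 < \<delta>'" using d r by (simp add: \<delta>'_def)
    have "\<exists>\<epsilon>>0. \<forall>z1 z2 z3. cmod z1 = 1 \<and> cmod z2 = 1 \<and> cmod z3 = 1 \<and> pev a m n z1 z2 z3 = 0
                 \<and> cmod (z1 - 1) < \<epsilon> \<and> cmod (z2 - 1) < \<epsilon> \<and> cmod (z3 - 1) < \<epsilon>
                 \<longrightarrow> z1 = 1 \<and> z2 = 1 \<and> z3 = 1"
    proof (rule isolated_aux[OF d' _ _ _ p11 p21])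
      show "x = 0 \<and> y = 0" if "\<bar>x\<bar> < \<delta>'" "\<bar>y\<bar> < \<delta>'" "rho a m n x y = 0" for x y
        using dz that by (auto simp: \<delta>'_def)
      show "p1ev a m n (cis x) (cis y) \<noteq> 0" if "\<bar>x\<bar> < \<delta>'" "\<bar>y\<bar> < \<delta>'" for x y
        using rho_eq[of x y] that by (auto simp: \<delta>'_def)
      show "rho a m n x y = 1 - (cmod (p2ev a m n (cis x) (cis y)))^2 / (cmod (p1ev a m n (cis x) (cis y)))^2" for x y
        by (rule rho_form)
    qed
    then show "\<exists>\<epsilon>>0. \<forall>z1 z2 z3. cmod z1 = 1 \<and> cmod z2 = 1 \<and> cmod z3 = 1 \<and> p z1 z2 z3 = 0
                 \<and> cmod (z1 - 1) < \<epsilon> \<and> cmod (z2 - 1) < \<epsilon> \<and> cmod (z3 - 1) < \<epsilon>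
                 \<longrightarrow> z1 = 1 \<and> z2 = 1 \<and> z3 = 1"
      unfolding p_def .
  qed
  show ?thesis unfolding c_eq using part1 iso KA by blast
qed

end
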